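(* The function $f$ has a unique global maximiser. Writing $x=(\mathrm{vec}(z^Q),z^S)\in\mathbb{R}^{n^2+n}$, where $\mathrm{vec}$ stacks the columns of $z^Q$ (so $z^{Q,i,j}$ occupies position $(j-1)n+i$), the first-order conditions $\nabla f=0$ are equivalent to the symmetric linear system $$\begin{pmatrix}H_{QQ}&H_{QS}\\ H_{QS}^\top&H_{SS}\end{pmatrix}\begin{pmatrix}\mathrm{vec}(z^Q)\\ z^S\end{pmatrix}=-\begin{pmatrix}b_Q\\ b_S\end{pmatrix},$$ with $$H_{SS}=-\tfrac{\sigma^2}{n}\Gamma-\tfrac{\gamma_{\rm P}\sigma^2}{n^2}J,\qquad H_{QS}=-\tfrac{\sigma}{n^{3/2}}(\rho\odot\nu)\otimes\Gamma-\tfrac{\gamma_{\rm P}\sigma}{n^{5/2}}(\rho\odot\nu)\otimes J,$$ $$H_{QQ}=-\tfrac1n(N^2\otimes\Gamma)-\tfrac{\gamma_{\rm P}}{n^2}(N^2\otimes J)-\tfrac1n\mathrm{BlockDiag}\big[(1/c_1)E_{11},\dots,(1/c_n)E_{nn}\big],$$ $b_Q=\mathrm{vec}\big((b_Q^{i,j})_{i,j}\big)$ with $b_Q^{i,j}=\frac{1}{nc_i}\mathbf 1_{\{i=j\}}+\frac{\gamma_{\rm P}}{n^2}\nu_j^2$, and $b_S=\frac{\gamma_{\rm P}\sigma}{n^{5/2}}\big(\sum_{i=1}^n\rho_i\nu_i\big)\mathbf 1_n$. This system has a unique solution, which is the maximiser of $f$, given by $$z^{S,\star}=(S_n-y_ns_ns_n^\top)\ell_n,\qquad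 z^{Q,i,j,\star}=\frac{q^\star_{i,j}}{\nu_j},$$ where $$q^\star_{i,j}=\begin{cases}\alpha_{i,n}K_{j,n}(z^{S,\star})-\frac{\sigma}{\sqrt n}\rho_jz^{S,i,\star},& j\ne i,\\[2pt] A_i^{-1}\Big(\frac{\gamma_{\rm P}}{n}K_{i,n}(z^{S,\star})-\gamma_i\frac{\sigma}{\sqrt n}\rho_iz^{S,i,\star}+\frac{1}{c_i\nu_i}\Big),& j=i.\end{cases}$$
   Context: Fix an integer $n\ge1$ and parameters $\sigma>0$, $\gamma_{\rm P}>0$, and for each $i\in\{1,\dots,n\}$: $c_i>0$, $\gamma_i>0$, $\nu_i>0$, $\rho_i\in(-1,1)$. Write $\nu=(\nu_1,\dots,\nu_n)^\top$, $\rho=(\rho_1,\dots,\rho_n)^\top$. The variables are a matrix $z^Q=(z^{Q,i,j})_{i,j}\in\mathbb{R}^{n\times n}$ ($i$ row, $j$ column) and a vector $z^S=(z^{S,1},\dots,z^{S,n})^\top\in\mathbb{R}^n$. Define $f:\mathbb{R}^{n\times n}\times\mathbb{R}^n\to\mathbb{R}$ by $$f(z^Q,z^S)=-\frac1n\sum_{i=1}^n\Big(\frac{(z^{Q,i,i})^2}{2c_i}+\frac{\gamma_i}{2}\sum_{j=1}^n\nu_j^2(z^{Q,i,j})^2+\frac{\gamma_i\sigma^2}{2}(z^{S,i})^2+\frac{\gamma_i\sigma}{\sqrt n}z^{S,i}\sum_{j=1}^n\rho_j\nu_jz^{Q,i,j}-\frac{z^{Q,i,i}}{c_i}\Big)-\frac{\gamma_{\rm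 P}}{2n^2}\sum_{i=1}^n\Big(\Big(\nu_i-\nu_i\sum_{j=1}^nz^{Q,j,i}-\frac{\rho_i\sigma}{\sqrt n}\sum_{j=1}^nz^{S,j}\Big)^2+\frac{(1-\rho_i^2)\sigma^2}{n}\Big(\sum_{j=1}^nz^{S,j}\Big)^2\Big).$$ Notation: $\Gamma=\mathrm{Diag}[\gamma_1,\dots,\gamma_n]$, $N=\mathrm{Diag}[\nu_1,\dots,\nu_n]$, $J=\mathbf 1_n\mathbf 1_n^\top$, $E_{ii}$ the $n\times n$ matrix with a single $1$ at $(i,i)$, $\otimes$ Kronecker product, $\odot$ entrywise product. Set $\lambda_n=\frac{\gamma_{\rm P}\sigma^2}{n^3}\sum_{j=1}^n(1-\rho_j^2)$ and for each $i$: $A_i=\gamma_i+\frac{1}{c_i\nu_i^2}$, $\alpha_{i,n}=\frac{\gamma_{\rm P}}{n\gamma_i}$, $\kappa_{i,n}=1+\frac{\gamma_{\rm P}}{n}\Big(\sum_{\ell=1}^n\frac1{\gamma_\ell}-\frac1{\gamma_i}\big(1-\frac{\gamma_i}{A_i}\big)\Big)$, $d_{i,n}=\kappa_{i,n}^{-1}\big(\nu_i-\frac{1}{c_i\nu_iA_i}\big)$, $m_{i,n}=\frac{\sigma}{\sqrt n\,\kappa_{i,n}}\rho_i\big(1-\frac{\gamma_i}{A_i}\big)$, $K_{i,n}(z^S)=d_{i,n}-m_{i,n}z^{S,i}$, $\mu_{i,n}=\gamma_i\frac{\sigma^2}{n}\Big(1-\frac1n\sum_{j=1}^n\rho_j^2+\big(1-\frac{\gamma_i}{A_i}\big)\frac{\rho_i^2}{n}\Big)+\frac{\gamma_{\rm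 P}\sigma^2\rho_i^2}{\kappa_{i,n}n^3}\big(1-\frac{\gamma_i}{A_i}\big)^2$, $\ell_{i,n}=\frac{\gamma_{\rm P}\sigma\rho_i}{n^{5/2}}\big(1-\frac{\gamma_i}{A_i}\big)d_{i,n}-\frac{\gamma_i\sigma}{n^{3/2}}\frac{\rho_i}{A_ic_i\nu_i}$, $s_{i,n}=\mu_{i,n}^{-1}$. Let $\ell_n=(\ell_{i,n})_i$, $s_n=(s_{i,n})_i$, $S_n=\mathrm{Diag}[s_n]$, $y_n=\frac{\lambda_n}{1+\lambda_n\mathbf 1_n^\top s_n}$. *)

theory Defs
  imports "HOL-Analysis.Analysis"
begin

text \<open>Vectors in R^n are real^'n, n x n matrices real^'n^'n (row index first).
  vec(zQ) is represented as an element of real^('n \<times> 'n), the entry at (i,j)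
  being zQ$i$j (this corresponds to position (j-1)n+i: j is the outer/block index).
  The full unknown (vec zQ, zS) in R^(n^2+n) lives in real^(('n \<times> 'n) + 'n).\<close>

definition vecm :: "real^'n^'m \<Rightarrow> real^('m \<times> 'n)" where
  "vecm Z = (\<chi> p. Z $ fst p $ snd p)"

text \<open>Kronecker product, consistent with column stacking: block index = outer (second)
  component of the pair, position inside block = inner (first) component.\<close>
definition kron :: "real^'b^'a \<Rightarrow> real^'d^'c \<Rightarrow> real^('d \<times> 'b)^('c \<times> 'a)" where
  "kron A B = (\<chi> p q. A $ snd p $ snd q * B $ fst p $ fst q)"

definition kronv :: "real^'a \<Rightarrow> real^'d^'c \<Rightarrow> real^'d^('c \<times> 'a)" where
  "kronv v B = (\<chi> p k. v $ snd p * B $ fst p $ k)"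

definition Diag :: "real^'n \<Rightarrow> real^'n^'n" where
  "Diag v = (\<chi> i j. if i = j then v $ i else 0)"

definition Jm :: "real^'n^'n" where
  "Jm = (\<chi> i j. 1)"

definition Eii :: "'n \<Rightarrow> real^'n^'n" where
  "Eii i = (\<chi> k l. if k = i \<and> l = i then 1 else 0)"

definition BlockDiag :: "('n::finite \<Rightarrow> real^'m^'m) \<Rightarrow> real^('m \<times> 'n)^('m \<times> 'n)" where
  "BlockDiag M = (\<chi> p q. if snd p = snd q then M (snd p) $ fst p $ fst q else 0)"

definition hadamard :: "real^'n \<Rightarrow> real^'n \<Rightarrow> real^'n" where
  "hadamard u v = (\<chi> i. u $ i * v $ i)"

definition blockmat :: "real^'p^'p \<Rightarrow> real^'s^'p \<Rightarrow> real^'s^'s \<Rightarrow> real^('p + 's)^('p + 's)" where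
  "blockmat HQQ HQS HSS = (\<chi> a b. case (a, b) of
      (Inl p, Inl q) \<Rightarrow> HQQ $ p $ q
    | (Inl p, Inr k) \<Rightarrow> HQS $ p $ k
    | (Inr k, Inl q) \<Rightarrow> HQS $ q $ k
    | (Inr k, Inr l) \<Rightarrow> HSS $ k $ l)"

definition stack :: "real^'p \<Rightarrow> real^'s \<Rightarrow> real^('p + 's)" where
  "stack u v = (\<chi> a. case a of Inl p \<Rightarrow> u $ p | Inr k \<Rightarrow> v $ k)"

definition fobj :: "real \<Rightarrow> real \<Rightarrow> real^'n \<Rightarrow> real^'n \<Rightarrow> real^'n \<Rightarrow> real^'n
    \<Rightarrow> real^'n^'n \<Rightarrow> real^'n \<Rightarrow> real" where
  "fobj \<sigma> \<gamma>P c \<gamma> \<nu> \<rho> zQ zS =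
    (let n = real CARD('n) in
     - (1 / n) * (\<Sum>i\<in>UNIV.
          (zQ$i$i)\<^sup>2 / (2 * c$i)
        + \<gamma>$i / 2 * (\<Sum>j\<in>UNIV. (\<nu>$j)\<^sup>2 * (zQ$i$j)\<^sup>2)
        + \<gamma>$i * \<sigma>\<^sup>2 / 2 * (zS$i)\<^sup>2
        + \<gamma>$i * \<sigma> / sqrt n * zS$i * (\<Sum>j\<in>UNIV. \<rho>$j * \<nu>$j * zQ$i$j)
        - zQ$i$i / c$i)
     - \<gamma>P / (2 * n\<^sup>2) * (\<Sum>i\<in>UNIV.
          (\<nu>$i - \<nu>$i * (\<Sum>j\<in>UNIV. zQ$j$i) - \<rho>$i * \<sigma> / sqrt n * (\<Sum>j\<in>UNIV. zS$j))\<^sup>2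
        + (1 - (\<rho>$i)\<^sup>2) * \<sigma>\<^sup>2 / n * (\<Sum>j\<in>UNIV. zS$j)\<^sup>2))"

definition HSS :: "real \<Rightarrow> real \<Rightarrow> real^'n \<Rightarrow> real^'n^'n" where
  "HSS \<sigma> \<gamma>P \<gamma> = (let n = real CARD('n) in
     (- (\<sigma>\<^sup>2 / n)) *\<^sub>R Diag \<gamma> - (\<gamma>P * \<sigma>\<^sup>2 / n\<^sup>2) *\<^sub>R Jm)"

definition HQS :: "real \<Rightarrow> real \<Rightarrow> real^'n \<Rightarrow> real^'n \<Rightarrow> real^'n \<Rightarrow> real^'n^('n \<times> 'n)" where
  "HQS \<sigma> \<gamma>P \<gamma> \<nu> \<rho> = (let n = real CARD('n) in
     (- (\<sigma> / n powr (3/2))) *\<^sub>R kronv (hadamard \<rho> \<nu>) (Diag \<gamma>)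
     - (\<gamma>P * \<sigma> / n powr (5/2)) *\<^sub>R kronv (hadamard \<rho> \<nu>) Jm)"

definition HQQ :: "real \<Rightarrow> real^'n \<Rightarrow> real^'n \<Rightarrow> real^'n \<Rightarrow> real^('n \<times> 'n)^('n \<times> 'n)" where
  "HQQ \<gamma>P c \<gamma> \<nu> = (let n = real CARD('n) in
     (- (1 / n)) *\<^sub>R kron (Diag (hadamard \<nu> \<nu>)) (Diag \<gamma>)
     - (\<gamma>P / n\<^sup>2) *\<^sub>R kron (Diag (hadamard \<nu> \<nu>)) Jm
     - (1 / n) *\<^sub>R BlockDiag (\<lambda>i. (1 / c$i) *\<^sub>R Eii i))"

definition bQ :: "real \<Rightarrow> real^'n \<Rightarrow> real^'n \<Rightarrow> real^('n \<times> 'n)" where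
  "bQ \<gamma>P c \<nu> = (let n = real CARD('n) in
     vecm (\<chi> i j. (if i = j then 1 / (n * c$i) else 0) + \<gamma>P / n\<^sup>2 * (\<nu>$j)\<^sup>2))"

definition bS :: "real \<Rightarrow> real \<Rightarrow> real^'n \<Rightarrow> real^'n \<Rightarrow> real^'n" where
  "bS \<sigma> \<gamma>P \<nu> \<rho> = (let n = real CARD('n) in
     (\<chi> k. \<gamma>P * \<sigma> / n powr (5/2) * (\<Sum>i\<in>UNIV. \<rho>$i * \<nu>$i)))"

definition Hfull :: "real \<Rightarrow> real \<Rightarrow> real^'n \<Rightarrow> real^'n \<Rightarrow> real^'n \<Rightarrow> real^'n
    \<Rightarrow> real^(('n \<times> 'n) + 'n)^(('n \<times> 'n) + 'n)" where
  "Hfull \<sigma> \<gamma>P c \<gamma> \<nu> \<rho> = blockmat (HQQ \<gamma>P c \<gamma> \<nu>) (HQS \<sigma> \<gamma>P \<gamma> \<nu> \<rho>) (HSS \<sigma> \<gamma>P \<gamma>)"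

definition bfull :: "real \<Rightarrow> real \<Rightarrow> real^'n \<Rightarrow> real^'n \<Rightarrow> real^'n \<Rightarrow> real^(('n \<times> 'n) + 'n)" where
  "bfull \<sigma> \<gamma>P c \<nu> \<rho> = stack (bQ \<gamma>P c \<nu>) (bS \<sigma> \<gamma>P \<nu> \<rho>)"

definition Acoef :: "real^'n \<Rightarrow> real^'n \<Rightarrow> real^'n \<Rightarrow> 'n \<Rightarrow> real" where
  "Acoef c \<gamma> \<nu> i = \<gamma>$i + 1 / (c$i * (\<nu>$i)\<^sup>2)"

definition alphacoef :: "real \<Rightarrow> real^'n \<Rightarrow> 'n \<Rightarrow> real" where
  "alphacoef \<gamma>P \<gamma> i = \<gamma>P / (real CARD('n) * \<gamma>$i)"

definition kappacoef :: "real \<Rightarrow> real^'n \<Rightarrow> real^'n \<Rightarrow> real^'n \<Rightarrow> 'n \<Rightarrow> real" where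
  "kappacoef \<gamma>P c \<gamma> \<nu> i = 1 + \<gamma>P / real CARD('n) *
     ((\<Sum>l\<in>UNIV. 1 / \<gamma>$l) - 1 / \<gamma>$i * (1 - \<gamma>$i / Acoef c \<gamma> \<nu> i))"

definition dcoef :: "real \<Rightarrow> real^'n \<Rightarrow> real^'n \<Rightarrow> real^'n \<Rightarrow> 'n \<Rightarrow> real" where
  "dcoef \<gamma>P c \<gamma> \<nu> i = (1 / kappacoef \<gamma>P c \<gamma> \<nu> i) *
     (\<nu>$i - 1 / (c$i * \<nu>$i * Acoef c \<gamma> \<nu> i))"

definition mcoef :: "real \<Rightarrow> real \<Rightarrow> real^'n \<Rightarrow> real^'n \<Rightarrow> real^'n \<Rightarrow> real^'n \<Rightarrow> 'n \<Rightarrow> real" where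
  "mcoef \<sigma> \<gamma>P c \<gamma> \<nu> \<rho> i = \<sigma> / (sqrt (real CARD('n)) * kappacoef \<gamma>P c \<gamma> \<nu> i) *
     \<rho>$i * (1 - \<gamma>$i / Acoef c \<gamma> \<nu> i)"

definition Kfun :: "real \<Rightarrow> real \<Rightarrow> real^'n \<Rightarrow> real^'n \<Rightarrow> real^'n \<Rightarrow> real^'n \<Rightarrow> 'n \<Rightarrow> real^'n \<Rightarrow> real" where
  "Kfun \<sigma> \<gamma>P c \<gamma> \<nu> \<rho> i zS = dcoef \<gamma>P c \<gamma> \<nu> i - mcoef \<sigma> \<gamma>P c \<gamma> \<nu> \<rho> i * zS$i"

definition mucoef :: "real \<Rightarrow> real \<Rightarrow> real^'n \<Rightarrow> real^'n \<Rightarrow> real^'n \<Rightarrow> real^'n \<Rightarrow> 'n \<Rightarrow> real" where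
  "mucoef \<sigma> \<gamma>P c \<gamma> \<nu> \<rho> i = (let n = real CARD('n); A = Acoef c \<gamma> \<nu> i in
     \<gamma>$i * \<sigma>\<^sup>2 / n * (1 - 1 / n * (\<Sum>j\<in>UNIV. (\<rho>$j)\<^sup>2) + (1 - \<gamma>$i / A) * (\<rho>$i)\<^sup>2 / n)
     + \<gamma>P * \<sigma>\<^sup>2 * (\<rho>$i)\<^sup>2 / (kappacoef \<gamma>P c \<gamma> \<nu> i * n ^ 3) * (1 - \<gamma>$i / A)\<^sup>2)"

definition ellcoef :: "real \<Rightarrow> real \<Rightarrow> real^'n \<Rightarrow> real^'n \<Rightarrow> real^'n \<Rightarrow> real^'n \<Rightarrow> 'n \<Rightarrow> real" where
  "ellcoef \<sigma> \<gamma>P c \<gamma> \<nu> \<rho> i = (let n = real CARD('n); A = Acoef c \<gamma> \<nu> i in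
     \<gamma>P * \<sigma> * \<rho>$i / n powr (5/2) * (1 - \<gamma>$i / A) * dcoef \<gamma>P c \<gamma> \<nu> i
     - \<gamma>$i * \<sigma> / n powr (3/2) * \<rho>$i / (A * c$i * \<nu>$i))"

definition lambdacoef :: "real \<Rightarrow> real \<Rightarrow> real^'n \<Rightarrow> real" where
  "lambdacoef \<sigma> \<gamma>P \<rho> = \<gamma>P * \<sigma>\<^sup>2 / real CARD('n) ^ 3 * (\<Sum>j\<in>UNIV. 1 - (\<rho>$j)\<^sup>2)"

definition svec :: "real \<Rightarrow> real \<Rightarrow> real^'n \<Rightarrow> real^'n \<Rightarrow> real^'n \<Rightarrow> real^'n \<Rightarrow> real^'n" where
  "svec \<sigma> \<gamma>P c \<gamma> \<nu> \<rho> = (\<chi> i. 1 / mucoef \<sigma> \<gamma>P c \<gamma> \<nu> \<rho> i)"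

definition ellvec :: "real \<Rightarrow> real \<Rightarrow> real^'n \<Rightarrow> real^'n \<Rightarrow> real^'n \<Rightarrow> real^'n \<Rightarrow> real^'n" where
  "ellvec \<sigma> \<gamma>P c \<gamma> \<nu> \<rho> = (\<chi> i. ellcoef \<sigma> \<gamma>P c \<gamma> \<nu> \<rho> i)"

definition ycoef :: "real \<Rightarrow> real \<Rightarrow> real^'n \<Rightarrow> real^'n \<Rightarrow> real^'n \<Rightarrow> real^'n \<Rightarrow> real" where
  "ycoef \<sigma> \<gamma>P c \<gamma> \<nu> \<rho> = lambdacoef \<sigma> \<gamma>P \<rho> /
     (1 + lambdacoef \<sigma> \<gamma>P \<rho> * (\<Sum>i\<in>UNIV. svec \<sigma> \<gamma>P c \<gamma> \<nu> \<rho> $ i))"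

definition zSstar :: "real \<Rightarrow> real \<Rightarrow> real^'n \<Rightarrow> real^'n \<Rightarrow> real^'n \<Rightarrow> real^'n \<Rightarrow> real^'n" where
  "zSstar \<sigma> \<gamma>P c \<gamma> \<nu> \<rho> = (let s = svec \<sigma> \<gamma>P c \<gamma> \<nu> \<rho> in
     (Diag s - ycoef \<sigma> \<gamma>P c \<gamma> \<nu> \<rho> *\<^sub>R (\<chi> i j. s$i * s$j)) *v ellvec \<sigma> \<gamma>P c \<gamma> \<nu> \<rho>)"

definition qstar :: "real \<Rightarrow> real \<Rightarrow> real^'n \<Rightarrow> real^'n \<Rightarrow> real^'n \<Rightarrow> real^'n \<Rightarrow> 'n \<Rightarrow> 'n \<Rightarrow> real" where
  "qstar \<sigma> \<gamma>P c \<gamma> \<nu> \<rho> i j = (let n = real CARD('n); zS = zSstar \<sigma> \<gamma>P c \<gamma> \<nu> \<rho> in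
     if j \<noteq> i then alphacoef \<gamma>P \<gamma> i * Kfun \<sigma> \<gamma>P c \<gamma> \<nu> \<rho> j zS - \<sigma> / sqrt n * \<rho>$j * zS$i
     else (1 / Acoef c \<gamma> \<nu> i) * (\<gamma>P / n * Kfun \<sigma> \<gamma>P c \<gamma> \<nu> \<rho> i zS
            - \<gamma>$i * \<sigma> / sqrt n * \<rho>$i * zS$i + 1 / (c$i * \<nu>$i)))"

definition zQstar :: "real \<Rightarrow> real \<Rightarrow> real^'n \<Rightarrow> real^'n \<Rightarrow> real^'n \<Rightarrow> real^'n \<Rightarrow> real^'n^'n" where
  "zQstar \<sigma> \<gamma>P c \<gamma> \<nu> \<rho> = (\<chi> i j. qstar \<sigma> \<gamma>P c \<gamma> \<nu> \<rho> i j / \<nu>$j)"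

end

theory Submission
  imports Defs
begin


lemma sum_UNIV_plus: "(\<Sum>a\<in>(UNIV::('a::finite + 'b::finite) set). f a) = (\<Sum>p\<in>UNIV. f (Inl p)) + (\<Sum>k\<in>UNIV. f (Inr k))"
proof -
  have "(\<Sum>a\<in>(UNIV::('a + 'b) set). f a) = sum f (Inl ` UNIV \<union> Inr ` UNIV)" by (simp only: UNIV_sum[symmetric])
  also have "\<dots> = sum f (Inl ` UNIV) + sum f (Inr ` UNIV)"
    by (rule sum.union_disjoint) auto
  also have "\<dots> = (\<Sum>p\<in>UNIV. f (Inl p)) + (\<Sum>k\<in>UNIV. f (Inr k))"
    by (simp add: sum.reindex)
  finally show ?thesis .
qed

lemma sum_UNIV_prod: "(\<Sum>p\<in>(UNIV::('a::finite \<times> 'b::finite) set). f p) = (\<Sum>i\<in>UNIV. \<Sum>j\<in>UNIV. f (i,j))"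
  by (simp add: sum.cartesian_product UNIV_Times_UNIV[symmetric] del: UNIV_Times_UNIV)

lemma stack_Inl[simp]: "stack u v $ Inl p = u $ p" and stack_Inr[simp]: "stack u v $ Inr k = v $ k"
  by (simp_all add: stack_def)

lemma vecm_nth[simp]: "vecm Z $ (i,j) = Z $ i $ j"
  by (simp add: vecm_def)

lemma inner_stack: "inner (stack a b) (stack c d) = inner a c + inner b d"
  by (simp add: inner_vec_def sum_UNIV_plus)

lemma inner_vecm: "inner (vecm A) (vecm B) = (\<Sum>i\<in>UNIV. \<Sum>j\<in>UNIV. A$i$j * B$i$j)"
  by (simp add: inner_vec_def sum_UNIV_prod)

lemma powr32: "(n::real) > 0 \<Longrightarrow> n powr (3/2) = n * sqrt n"
proof -
  assume n: "n > 0"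
  have "n powr (3/2) = n powr (1 + 1/2)" by simp
  also have "\<dots> = n * sqrt n" using n by (simp only: powr_add powr_half_sqrt) simp
  finally show ?thesis .
qed
lemma powr52: "(n::real) > 0 \<Longrightarrow> n powr (5/2) = n^2 * sqrt n"
proof -
  assume n: "n > 0"
  have "n powr (5/2) = n powr (2 + 1/2)" by simp
  also have "\<dots> = n^2 * sqrt n" using n by (simp only: powr_add powr_half_sqrt) simp
  finally show ?thesis .
qed



lemma sum_if_const: "(\<Sum>j\<in>A. if P then f j else 0) = (if P then (\<Sum>j\<in>A. f j) else (0::real))" by simp

lemma ifz_mult: "(if P then a else 0) * (z::real) = (if P then a * z else 0)" by simp
lemma mult_ifz: "(z::real) * (if P then a else 0) = (if P then z * a else 0)" by simp

lemma HQQ_entry: "HQQ \<gamma>P c \<gamma> \<nu> $ (i,j) $ (k,l) =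
   (if i = k then (if j = l then - (1/real CARD('n)) * (\<nu>$j)^2 * \<gamma>$i else 0) else 0)
 + (if j = l then - \<gamma>P/(real CARD('n))^2 * (\<nu>$j)^2 else 0)
 + (if i = j then (if k = j then (if l = j then - (1/real CARD('n)) / c$j else 0) else 0) else 0)"
  for \<gamma>P :: real and c \<gamma> \<nu> :: "real^'n"
  by (auto simp add: HQQ_def kron_def Diag_def Jm_def BlockDiag_def Eii_def hadamard_def Let_def power2_eq_square)

lemma HQS_entry: "HQS \<sigma> \<gamma>P \<gamma> \<nu> \<rho> $ (i,j) $ k =
   (if i = k then - \<sigma>/(real CARD('n) powr (3/2)) * \<rho>$j*\<nu>$j*\<gamma>$i else 0)
   - \<gamma>P*\<sigma>/(real CARD('n) powr (5/2)) * \<rho>$j*\<nu>$j"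
  for \<gamma>P :: real and c \<gamma> \<nu> :: "real^'n"
  by (auto simp add: HQS_def kronv_def Diag_def Jm_def hadamard_def Let_def)

lemma HSS_entry: "HSS \<sigma> \<gamma>P \<gamma> $ k $ l =
   (if k = l then - \<sigma>\<^sup>2/real CARD('n) * \<gamma>$k else 0) - \<gamma>P*\<sigma>\<^sup>2/(real CARD('n))^2"
  for \<gamma>P :: real and \<gamma> :: "real^'n"
  by (auto simp add: HSS_def Diag_def Jm_def Let_def)

lemma HQ_comp: "(Hfull \<sigma> \<gamma>P c \<gamma> \<nu> \<rho> *v stack (vecm zQ) zS) $ Inl (i,j) =
  - (1/real CARD('n)) * (\<nu>$j)^2 * \<gamma>$i * zQ$i$j - \<gamma>P/(real CARD('n))^2 * (\<nu>$j)^2 * (\<Sum>k\<in>UNIV. zQ$k$j)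
  - (1/real CARD('n)) * (if i = j then zQ$j$j / c$j else 0)
  - \<sigma>/(real CARD('n) powr (3/2)) * \<rho>$j*\<nu>$j*\<gamma>$i*zS$i
  - \<gamma>P*\<sigma>/(real CARD('n) powr (5/2)) * \<rho>$j*\<nu>$j*(\<Sum>k\<in>UNIV. zS$k)"
  for zQ :: "real^'n^'n"
  apply (simp add: matrix_vector_mult_def Hfull_def blockmat_def sum_UNIV_plus sum_UNIV_prod
     HQQ_entry HQS_entry distrib_right left_diff_distrib sum.distrib sum_subtractf ifz_mult mult_ifz
     del: mult_minus_left)
  apply (simp only: sum_if_const)
  apply (simp add: sum_divide_distrib[symmetric] sum_distrib_left[symmetric] sum_distrib_right[symmetric])
  apply (simp add: algebra_simps mult_ifz ifz_mult)
  done

lemma HS_comp: "(Hfull \<sigma> \<gamma>P c \<gamma> \<nu> \<rho> *v stack (vecm zQ) zS) $ Inr k =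
  - \<sigma>/(real CARD('n) powr (3/2)) * \<gamma>$k * (\<Sum>j\<in>UNIV. \<rho>$j*\<nu>$j*zQ$k$j)
  - \<gamma>P*\<sigma>/(real CARD('n) powr (5/2)) * (\<Sum>i\<in>UNIV. \<Sum>j\<in>UNIV. \<rho>$j*\<nu>$j*zQ$i$j)
  - \<sigma>\<^sup>2/real CARD('n) * \<gamma>$k * zS$k - \<gamma>P*\<sigma>\<^sup>2/(real CARD('n))^2 * (\<Sum>l\<in>UNIV. zS$l)"
  for zQ :: "real^'n^'n"
  apply (simp add: matrix_vector_mult_def Hfull_def blockmat_def sum_UNIV_plus sum_UNIV_prod
     HSS_entry HQS_entry distrib_right left_diff_distrib sum.distrib sum_subtractf ifz_mult mult_ifz
     del: mult_minus_left)
  apply (simp only: sum_if_const)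
  apply (simp add: sum_divide_distrib[symmetric] sum_distrib_left[symmetric] sum_distrib_right[symmetric])
  apply (simp add: algebra_simps)
  apply (simp add: sum_negf sum_divide_distrib[symmetric] sum_distrib_left[symmetric])
  done


lemma inner_HX: "inner (stack (vecm zQ) zS) (Hfull \<sigma> \<gamma>P c \<gamma> \<nu> \<rho> *v stack (vecm zQ) zS) =
  (\<Sum>i\<in>UNIV. \<Sum>j\<in>UNIV. zQ$i$j * (Hfull \<sigma> \<gamma>P c \<gamma> \<nu> \<rho> *v stack (vecm zQ) zS) $ Inl (i,j))
  + (\<Sum>k\<in>UNIV. zS$k * (Hfull \<sigma> \<gamma>P c \<gamma> \<nu> \<rho> *v stack (vecm zQ) zS) $ Inr k)"
  for zQ :: "real^'n^'n"
  by (simp add: inner_vec_def sum_UNIV_plus sum_UNIV_prod)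

lemma sum2_cm: "(\<forall>i j. f i j = a * g i j / k) \<Longrightarrow> (\<Sum>i\<in>A. \<Sum>j\<in>B. f i j) = a * (\<Sum>i\<in>A. \<Sum>j\<in>B. g i j) / (k::real)"
  by (simp add: sum_distrib_left sum_divide_distrib)
lemma sum1_cm: "(\<forall>i. f i = a * g i / k) \<Longrightarrow> (\<Sum>i\<in>A. f i) = a * (\<Sum>i\<in>A. g i) / (k::real)"
  by (simp add: sum_distrib_left sum_divide_distrib)

lemma QF: 
  fixes zQ :: "real^'n^'n"
  defines "n \<equiv> real CARD('n)"
  defines "r \<equiv> sqrt n"
  shows "inner (stack (vecm zQ) zS) (Hfull \<sigma> \<gamma>P c \<gamma> \<nu> \<rho> *v stack (vecm zQ) zS) =
   - 1/n * (\<Sum>i\<in>UNIV. \<Sum>j\<in>UNIV. (\<nu>$j)^2 * \<gamma>$i * (zQ$i$j)^2)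
   - \<gamma>P/n^2 * (\<Sum>j\<in>UNIV. (\<nu>$j)^2 * (\<Sum>k\<in>UNIV. zQ$k$j)^2)
   - 1/n * (\<Sum>j\<in>UNIV. (zQ$j$j)^2 / c$j)
   - 2*\<sigma>/(n*r) * (\<Sum>i\<in>UNIV. \<gamma>$i * zS$i * (\<Sum>j\<in>UNIV. \<rho>$j*\<nu>$j*zQ$i$j))
   - 2*\<gamma>P*\<sigma>/(n^2*r) * (\<Sum>k\<in>UNIV. zS$k) * (\<Sum>i\<in>UNIV. \<Sum>j\<in>UNIV. \<rho>$j*\<nu>$j*zQ$i$j)
   - \<sigma>\<^sup>2/n * (\<Sum>k\<in>UNIV. \<gamma>$k * (zS$k)^2)
   - \<gamma>P*\<sigma>\<^sup>2/n^2 * (\<Sum>k\<in>UNIV. zS$k)^2"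
proof -
  have n: "n > 0" unfolding n_def by simp
  have p3: "n powr (3/2) = n * r" using powr32[OF n] r_def by simp
  have p5: "n powr (5/2) = n^2 * r" using powr52[OF n] r_def by simp
  have b: "(\<Sum>i\<in>UNIV. \<Sum>j\<in>UNIV. zQ$i$j * ((\<nu>$j)^2 * (\<Sum>k\<in>UNIV. zQ$k$j)))
      = (\<Sum>j\<in>UNIV. (\<nu>$j)^2 * (\<Sum>k\<in>UNIV. zQ$k$j)^2)"
    apply (subst sum.swap) apply (simp add: sum_distrib_left[symmetric] sum_distrib_right[symmetric] power2_eq_square)
    by (simp add: mult_ac)
  have c: "(\<Sum>i\<in>UNIV. \<Sum>j\<in>UNIV. zQ$i$j * (if i = j then zQ$j$j / c$j else 0)) = (\<Sum>j\<in>UNIV. (zQ$j$j)^2 / c$j)"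
    by (simp add: mult_ifz power2_eq_square)
  let ?S = "\<Sum>k\<in>UNIV. zS$k"
  let ?P = "\<Sum>i\<in>UNIV. \<Sum>j\<in>UNIV. \<rho>$j*\<nu>$j*zQ$i$j"
  let ?T4 = "\<Sum>i\<in>UNIV. \<gamma>$i * zS$i * (\<Sum>j\<in>UNIV. \<rho>$j*\<nu>$j*zQ$i$j)"
  have e1: "(\<Sum>i\<in>UNIV. \<Sum>j\<in>UNIV. zQ $ i $ j * ((\<nu> $ j)\<^sup>2 * \<gamma> $ i * zQ $ i $ j) / n)
     = 1 * (\<Sum>i\<in>UNIV. \<Sum>j\<in>UNIV. (\<nu>$j)^2 * \<gamma>$i * (zQ$i$j)^2) / n"
    by (rule sum2_cm) (simp add: power2_eq_square)
  have e2: "(\<Sum>i\<in>UNIV. \<Sum>j\<in>UNIV. zQ $ i $ j * (\<gamma>P * (\<nu> $ j)\<^sup>2 * (\<Sum>k\<in>UNIV. zQ $ k $ j)) / n\<^sup>2)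
     = \<gamma>P * (\<Sum>j\<in>UNIV. (\<nu>$j)^2 * (\<Sum>k\<in>UNIV. zQ$k$j)^2) / n^2"
    by (subst b[symmetric], rule sum2_cm) simp
  have e3: "(\<Sum>i\<in>UNIV. \<Sum>j\<in>UNIV. zQ $ i $ j * (if i = j then zQ $ j $ j / c $ j else 0) / n)
     = 1 * (\<Sum>j\<in>UNIV. (zQ$j$j)^2 / c$j) / n"
    by (subst c[symmetric], rule sum2_cm) simp
  have e4: "(\<Sum>i\<in>UNIV. \<Sum>j\<in>UNIV. zQ $ i $ j * (\<sigma> * \<rho> $ j * \<nu> $ j * \<gamma> $ i * zS $ i) / (n * r))
     = \<sigma> * ?T4 / (n * r)"
  proof -
    have "?T4 = (\<Sum>i\<in>UNIV. \<Sum>j\<in>UNIV. \<gamma>$i * zS$i * (\<rho>$j*\<nu>$j*zQ$i$j))"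
      by (simp add: sum_distrib_left)
    then show ?thesis by (simp only:) (rule sum2_cm, simp)
  qed
  have e5: "(\<Sum>i\<in>UNIV. \<Sum>j\<in>UNIV. zQ $ i $ j * (\<gamma>P * \<sigma> * \<rho> $ j * \<nu> $ j * ?S) / (n\<^sup>2 * r))
     = (\<gamma>P * \<sigma> * ?S) * ?P / (n\<^sup>2 * r)"
    by (rule sum2_cm) simp
  have f1: "(\<Sum>k\<in>UNIV. zS $ k * (\<sigma> * \<gamma> $ k * (\<Sum>j\<in>UNIV. \<rho> $ j * \<nu> $ j * zQ $ k $ j)) / (n * r))
     = \<sigma> * ?T4 / (n * r)"
    by (rule sum1_cm) simp
  have f2: "(\<Sum>k\<in>UNIV. zS $ k * (\<gamma>P * \<sigma> * ?P) / (n\<^sup>2 * r)) = (\<gamma>P * \<sigma> * ?P) * ?S / (n\<^sup>2 * r)"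
    by (rule sum1_cm) simp
  have f3: "(\<Sum>k\<in>UNIV. zS $ k * (\<sigma>\<^sup>2 * \<gamma> $ k * zS $ k) / n) = \<sigma>\<^sup>2 * (\<Sum>k\<in>UNIV. \<gamma>$k * (zS$k)^2) / n"
    by (rule sum1_cm) (simp add: power2_eq_square)
  have f4: "(\<Sum>k\<in>UNIV. zS $ k * (\<gamma>P * \<sigma>\<^sup>2 * ?S) / n\<^sup>2) = (\<gamma>P * \<sigma>\<^sup>2 * ?S) * ?S / n\<^sup>2"
    by (rule sum1_cm) simp
  show ?thesis
    unfolding inner_HX HQ_comp HS_comp n_def[symmetric] p3 p5
    apply (simp add: right_diff_distrib sum_subtractf sum.distrib sum_negf)
    apply (simp only: e1 e2 e3 e4 e5 f1 f2 f3 f4)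
    apply (simp add: field_simps power2_eq_square)
    done
qed


lemma inner_b:
  fixes zQ :: "real^'n^'n"
  defines "n \<equiv> real CARD('n)"
  defines "r \<equiv> sqrt n"
  shows "inner (bfull \<sigma> \<gamma>P c \<nu> \<rho>) (stack (vecm zQ) zS) =
     1/n * (\<Sum>j\<in>UNIV. zQ$j$j / c$j) + \<gamma>P/n^2 * (\<Sum>j\<in>UNIV. (\<nu>$j)^2 * (\<Sum>k\<in>UNIV. zQ$k$j))
     + \<gamma>P*\<sigma>/(n^2*r) * (\<Sum>i\<in>UNIV. \<rho>$i*\<nu>$i) * (\<Sum>k\<in>UNIV. zS$k)"
proof -
  have n: "n > 0" unfolding n_def by simp
  have p5: "n powr (5/2) = n^2 * r" using powr52[OF n] r_def by simp
  have a: "(\<Sum>i\<in>UNIV. \<Sum>j\<in>UNIV. (if i = j then 1 / (n * c$i) else 0) * zQ$i$j) = 1 * (\<Sum>j\<in>UNIV. zQ$j$j / c$j) / n"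
    by (simp add: ifz_mult mult_ifz sum_divide_distrib ac_simps)
  have b: "(\<Sum>i\<in>UNIV. \<Sum>j\<in>UNIV. \<gamma>P / n\<^sup>2 * (\<nu>$j)\<^sup>2 * zQ$i$j) = \<gamma>P * (\<Sum>j\<in>UNIV. (\<nu>$j)^2 * (\<Sum>k\<in>UNIV. zQ$k$j)) / n^2"
  proof -
    have "(\<Sum>j\<in>UNIV. (\<nu>$j)^2 * (\<Sum>k\<in>UNIV. zQ$k$j)) = (\<Sum>i\<in>UNIV. \<Sum>j\<in>UNIV. (\<nu>$j)\<^sup>2 * zQ$i$j)"
      by (subst sum.swap) (simp add: sum_distrib_left)
    then show ?thesis by (simp only:) (rule sum2_cm, simp)
  qed
  have c: "(\<Sum>k\<in>UNIV. \<gamma>P * \<sigma> / (n^2*r) * (\<Sum>i\<in>UNIV. \<rho>$i * \<nu>$i) * zS$k) = (\<gamma>P * \<sigma> * (\<Sum>i\<in>UNIV. \<rho>$i*\<nu>$i)) * (\<Sum>k\<in>UNIV. zS$k) / (n^2*r)"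
    by (rule sum1_cm) simp
  show ?thesis
    unfolding inner_vec_def sum_UNIV_plus sum_UNIV_prod bfull_def bQ_def bS_def Let_def n_def[symmetric] p5
    apply (simp only: inner_real_def vecm_nth vec_lambda_beta distrib_right sum.distrib stack_Inl stack_Inr)
    apply (simp only: a b c)
    apply (simp add: field_simps)
    done
qed

lemma fobj_exp:
  fixes zQ :: "real^'n^'n"
  defines "n \<equiv> real CARD('n)"
  defines "r \<equiv> sqrt n"
  shows "fobj \<sigma> \<gamma>P c \<gamma> \<nu> \<rho> zQ zS =
    - 1/n * (1/2 * (\<Sum>j\<in>UNIV. (zQ$j$j)^2 / c$j) + 1/2 * (\<Sum>i\<in>UNIV. \<Sum>j\<in>UNIV. (\<nu>$j)^2 * \<gamma>$i * (zQ$i$j)^2)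
        + \<sigma>\<^sup>2/2 * (\<Sum>k\<in>UNIV. \<gamma>$k * (zS$k)^2)
        + \<sigma>/r * (\<Sum>i\<in>UNIV. \<gamma>$i * zS$i * (\<Sum>j\<in>UNIV. \<rho>$j*\<nu>$j*zQ$i$j))
        - (\<Sum>j\<in>UNIV. zQ$j$j / c$j))
    - \<gamma>P/(2*n^2) * ((\<Sum>i\<in>UNIV. (\<nu>$i)^2) - 2 * (\<Sum>j\<in>UNIV. (\<nu>$j)^2 * (\<Sum>k\<in>UNIV. zQ$k$j))
        + (\<Sum>j\<in>UNIV. (\<nu>$j)^2 * (\<Sum>k\<in>UNIV. zQ$k$j)^2)
        - 2*\<sigma>/r * (\<Sum>k\<in>UNIV. zS$k) * (\<Sum>i\<in>UNIV. \<rho>$i*\<nu>$i)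
        + 2*\<sigma>/r * (\<Sum>k\<in>UNIV. zS$k) * (\<Sum>i\<in>UNIV. \<Sum>j\<in>UNIV. \<rho>$j*\<nu>$j*zQ$i$j)
        + \<sigma>\<^sup>2 * (\<Sum>k\<in>UNIV. zS$k)^2)"
proof -
  have n: "n > 0" unfolding n_def by simp
  have rr: "r^2 = n" unfolding r_def using n by simp
  have r: "r > 0" unfolding r_def using n by simp
  let ?S = "\<Sum>k\<in>UNIV. zS$k"
  let ?col = "\<lambda>i. \<Sum>j\<in>UNIV. zQ$j$i"
  have pw: "\<And>i. (\<nu>$i - \<nu>$i * ?col i - \<rho>$i * \<sigma> / r * ?S)\<^sup>2 + (1 - (\<rho>$i)\<^sup>2) * \<sigma>\<^sup>2 / n * ?S\<^sup>2
     = (\<nu>$i)^2 - 2 * ((\<nu>$i)^2 * ?col i) + (\<nu>$i)^2 * (?col i)^2 - 2*\<sigma>/r * ?S * (\<rho>$i*\<nu>$i)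
       + 2*\<sigma>/r * ?S * (\<rho>$i*\<nu>$i * ?col i) + \<sigma>\<^sup>2 * ?S\<^sup>2 / n"
    using r by (simp add: rr[symmetric] field_simps power2_eq_square)
  have sP: "(\<Sum>i\<in>UNIV. \<rho>$i*\<nu>$i * ?col i) = (\<Sum>i\<in>UNIV. \<Sum>j\<in>UNIV. \<rho>$j*\<nu>$j*zQ$i$j)"
    by (subst sum.swap) (simp add: sum_distrib_left)
  have second: "(\<Sum>i\<in>UNIV. (\<nu>$i - \<nu>$i * ?col i - \<rho>$i * \<sigma> / r * ?S)\<^sup>2 + (1 - (\<rho>$i)\<^sup>2) * \<sigma>\<^sup>2 / n * ?S\<^sup>2)
     = (\<Sum>i\<in>UNIV. (\<nu>$i)^2) - 2 * (\<Sum>j\<in>UNIV. (\<nu>$j)^2 * ?col j)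
        + (\<Sum>j\<in>UNIV. (\<nu>$j)^2 * (?col j)^2)
        - 2*\<sigma>/r * ?S * (\<Sum>i\<in>UNIV. \<rho>$i*\<nu>$i)
        + 2*\<sigma>/r * ?S * (\<Sum>i\<in>UNIV. \<Sum>j\<in>UNIV. \<rho>$j*\<nu>$j*zQ$i$j)
        + \<sigma>\<^sup>2 * ?S\<^sup>2"
    unfolding pw sP[symmetric] using n
    by (simp add: sum.distrib sum_subtractf sum_distrib_left[symmetric] sum_divide_distrib[symmetric] n_def)
  have t2: "(\<Sum>i\<in>UNIV. \<gamma>$i / 2 * (\<Sum>j\<in>UNIV. (\<nu>$j)\<^sup>2 * (zQ$i$j)\<^sup>2))
     = 1/2 * (\<Sum>i\<in>UNIV. \<Sum>j\<in>UNIV. (\<nu>$j)^2 * \<gamma>$i * (zQ$i$j)^2)"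
    by (simp add: sum_distrib_left mult_ac)
  have t4: "(\<Sum>i\<in>UNIV. \<gamma>$i * \<sigma> / r * zS$i * (\<Sum>j\<in>UNIV. \<rho>$j * \<nu>$j * zQ$i$j))
     = \<sigma>/r * (\<Sum>i\<in>UNIV. \<gamma>$i * zS$i * (\<Sum>j\<in>UNIV. \<rho>$j*\<nu>$j*zQ$i$j))"
    by (simp add: sum_distrib_left mult_ac)
  have t1: "(\<Sum>i\<in>UNIV. (zQ$i$i)\<^sup>2 / (2 * c$i)) = 1/2 * (\<Sum>j\<in>UNIV. (zQ$j$j)^2 / c$j)"
    by (simp add: sum_distrib_left)
  have t3: "(\<Sum>i\<in>UNIV. \<gamma>$i * \<sigma>\<^sup>2 / 2 * (zS$i)\<^sup>2) = \<sigma>\<^sup>2/2 * (\<Sum>k\<in>UNIV. \<gamma>$k * (zS$k)^2)"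
    by (simp add: sum_distrib_left mult_ac)
  show ?thesis
    unfolding fobj_def Let_def n_def[symmetric] r_def[symmetric]
    apply (simp only: second)
    apply (simp only: sum.distrib sum_subtractf t1 t2 t3 t4)
    done
qed


lemma fobj_quad:
  fixes zQ :: "real^'n^'n"
  shows "fobj \<sigma> \<gamma>P c \<gamma> \<nu> \<rho> zQ zS =
    1/2 * inner (stack (vecm zQ) zS) (Hfull \<sigma> \<gamma>P c \<gamma> \<nu> \<rho> *v stack (vecm zQ) zS)
    + inner (bfull \<sigma> \<gamma>P c \<nu> \<rho>) (stack (vecm zQ) zS)
    - \<gamma>P/(2*(real CARD('n))^2) * (\<Sum>i\<in>UNIV. (\<nu>$i)^2)"
proof -
  define n where "n = real CARD('n)"
  define r where "r = sqrt n"
  have n: "n > 0" unfolding n_def by simp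
  have rr: "r^2 = n" unfolding r_def using n by simp
  have r: "r > 0" unfolding r_def using n by simp
  show ?thesis
    unfolding fobj_exp QF inner_b n_def[symmetric] r_def[symmetric]
    using r by (simp add: rr[symmetric] field_simps power2_eq_square)
qed

lemma QF_sos:
  fixes zQ :: "real^'n^'n"
  defines "n \<equiv> real CARD('n)"
  defines "r \<equiv> sqrt n"
  shows "inner (stack (vecm zQ) zS) (Hfull \<sigma> \<gamma>P c \<gamma> \<nu> \<rho> *v stack (vecm zQ) zS) =
   - 1/n * ((\<Sum>j\<in>UNIV. (zQ$j$j)^2 / c$j)
            + (\<Sum>i\<in>UNIV. \<gamma>$i * (\<Sum>j\<in>UNIV. (\<nu>$j * zQ$i$j + \<sigma>*\<rho>$j/r * zS$i)^2))
            + \<sigma>\<^sup>2 * (1 - (\<Sum>j\<in>UNIV. (\<rho>$j)^2)/n) * (\<Sum>k\<in>UNIV. \<gamma>$k * (zS$k)^2))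
   - \<gamma>P/n^2 * (\<Sum>i\<in>UNIV. (\<nu>$i * (\<Sum>k\<in>UNIV. zQ$k$i) + \<rho>$i*\<sigma>/r * (\<Sum>k\<in>UNIV. zS$k))^2
                    + (1 - (\<rho>$i)^2) * \<sigma>\<^sup>2 / n * (\<Sum>k\<in>UNIV. zS$k)^2)"
proof -
  have n: "n > 0" unfolding n_def by simp
  have rr: "r^2 = n" unfolding r_def using n by simp
  have r: "r > 0" unfolding r_def using n by simp
  let ?S = "\<Sum>k\<in>UNIV. zS$k"
  let ?col = "\<lambda>i. \<Sum>j\<in>UNIV. zQ$j$i"
  let ?R2 = "\<Sum>j\<in>UNIV. (\<rho>$j)^2"
  have pwA: "\<And>i j. (\<nu>$j * zQ$i$j + \<sigma>*\<rho>$j/r * zS$i)^2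
     = (\<nu>$j)^2 * (zQ$i$j)^2 + 2*\<sigma>/r * zS$i * (\<rho>$j*\<nu>$j*zQ$i$j) + \<sigma>\<^sup>2/n * (zS$i)^2 * (\<rho>$j)^2"
    using r by (simp add: rr[symmetric] field_simps power2_eq_square)
  have Ai: "\<And>i. \<gamma>$i * (\<Sum>j\<in>UNIV. (\<nu>$j * zQ$i$j + \<sigma>*\<rho>$j/r * zS$i)^2)
     = \<gamma>$i * (\<Sum>j\<in>UNIV. (\<nu>$j)^2 * (zQ$i$j)^2) + \<gamma>$i * (2*\<sigma>/r * zS$i * (\<Sum>j\<in>UNIV. \<rho>$j*\<nu>$j*zQ$i$j))
       + \<gamma>$i * (\<sigma>\<^sup>2/n * (zS$i)^2 * ?R2)"
    unfolding pwA by (simp only: sum.distrib sum_distrib_left[symmetric] distrib_left)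
  have A1: "(\<Sum>i\<in>UNIV. \<gamma>$i * (\<Sum>j\<in>UNIV. (\<nu>$j)^2 * (zQ$i$j)^2)) = (\<Sum>i\<in>UNIV. \<Sum>j\<in>UNIV. (\<nu>$j)^2 * \<gamma>$i * (zQ$i$j)^2)"
    by (simp add: sum_distrib_left mult_ac)
  have A2: "(\<Sum>i\<in>UNIV. \<gamma>$i * (2*\<sigma>/r * zS$i * (\<Sum>j\<in>UNIV. \<rho>$j*\<nu>$j*zQ$i$j))) = 2*\<sigma>/r * (\<Sum>i\<in>UNIV. \<gamma>$i * zS$i * (\<Sum>j\<in>UNIV. \<rho>$j*\<nu>$j*zQ$i$j))"
    by (simp add: sum_distrib_left mult_ac)
  have A3: "(\<Sum>i\<in>UNIV. \<gamma>$i * (\<sigma>\<^sup>2/n * (zS$i)^2 * ?R2)) = \<sigma>\<^sup>2/n * ?R2 * (\<Sum>k\<in>UNIV. \<gamma>$k * (zS$k)^2)"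
    unfolding sum_distrib_left[of "\<sigma>\<^sup>2/n * ?R2" "\<lambda>k. \<gamma>$k * (zS$k)^2" UNIV]
    by (rule sum.cong) (simp_all add: mult_ac)
  have A: "(\<Sum>i\<in>UNIV. \<gamma>$i * (\<Sum>j\<in>UNIV. (\<nu>$j * zQ$i$j + \<sigma>*\<rho>$j/r * zS$i)^2))
     = (\<Sum>i\<in>UNIV. \<Sum>j\<in>UNIV. (\<nu>$j)^2 * \<gamma>$i * (zQ$i$j)^2)
       + 2*\<sigma>/r * (\<Sum>i\<in>UNIV. \<gamma>$i * zS$i * (\<Sum>j\<in>UNIV. \<rho>$j*\<nu>$j*zQ$i$j))
       + \<sigma>\<^sup>2/n * ?R2 * (\<Sum>k\<in>UNIV. \<gamma>$k * (zS$k)^2)"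
    unfolding Ai sum.distrib A1 A2 A3 ..
  have pwB: "\<And>i. (\<nu>$i * ?col i + \<rho>$i*\<sigma>/r * ?S)^2 + (1 - (\<rho>$i)^2) * \<sigma>\<^sup>2 / n * ?S^2
     = (\<nu>$i)^2 * (?col i)^2 + 2*\<sigma>/r * ?S * (\<rho>$i*\<nu>$i * ?col i) + \<sigma>\<^sup>2 * ?S^2 / n"
    using r by (simp add: rr[symmetric] field_simps power2_eq_square)
  have sP: "(\<Sum>i\<in>UNIV. \<rho>$i*\<nu>$i * ?col i) = (\<Sum>i\<in>UNIV. \<Sum>j\<in>UNIV. \<rho>$j*\<nu>$j*zQ$i$j)"
    by (subst sum.swap) (simp add: sum_distrib_left)
  have B: "(\<Sum>i\<in>UNIV. (\<nu>$i * ?col i + \<rho>$i*\<sigma>/r * ?S)^2 + (1 - (\<rho>$i)^2) * \<sigma>\<^sup>2 / n * ?S^2)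
     = (\<Sum>j\<in>UNIV. (\<nu>$j)^2 * (?col j)^2) + 2*\<sigma>/r * ?S * (\<Sum>i\<in>UNIV. \<Sum>j\<in>UNIV. \<rho>$j*\<nu>$j*zQ$i$j)
       + \<sigma>\<^sup>2 * ?S^2"
    unfolding pwB sP[symmetric] using n
    by (simp add: sum.distrib sum_distrib_left[symmetric] sum_divide_distrib[symmetric] n_def)
  show ?thesis
    unfolding QF A B n_def[symmetric] r_def[symmetric]
    using n r by (simp add: rr[symmetric] field_simps power2_eq_square)
qed



definition unst :: "real^(('n \<times> 'n) + 'n) \<Rightarrow> (real^'n^'n) \<times> (real^'n)" where
  "unst X = ((\<chi> i j. X $ Inl (i,j)), (\<chi> k. X $ Inr k))"

lemma stack_unst: "stack (vecm (fst (unst X))) (snd (unst X)) = X"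
  by (simp add: unst_def vec_eq_iff stack_def vecm_def split: sum.split)

lemma unst_stack: "unst (stack (vecm zQ) zS) = (zQ, zS)"
  by (simp add: unst_def vec_eq_iff)

lemma stack_zero_iff: "stack (vecm zQ) zS = 0 \<longleftrightarrow> zQ = 0 \<and> zS = 0"
proof
  assume h: "stack (vecm zQ) zS = 0"
  have "\<And>i j. zQ$i$j = 0"
  proof -
    fix i j
    have "stack (vecm zQ) zS $ Inl (i,j) = 0" using h by simp
    then show "zQ$i$j = 0" by simp
  qed
  moreover have "\<And>k. zS$k = 0"
  proof -
    fix k
    have "stack (vecm zQ) zS $ Inr k = 0" using h by simp
    then show "zS$k = 0" by simp
  qed
  ultimately show "zQ = 0 \<and> zS = 0" by (simp add: vec_eq_iff)
next
  assume "zQ = 0 \<and> zS = 0"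
  then show "stack (vecm zQ) zS = 0" by (simp add: vec_eq_iff stack_def vecm_def split: sum.split)
qed

lemma stack_zero: "stack (vecm 0) 0 = 0"
  by (simp add: vec_eq_iff stack_def vecm_def split: sum.split)

context
  fixes \<sigma> \<gamma>P :: real and c \<gamma> \<nu> \<rho> :: "real^'n"
  assumes sig: "\<sigma> > 0" and gP: "\<gamma>P > 0"
    and cpos: "\<forall>i. c$i > 0" and gpos: "\<forall>i. \<gamma>$i > 0" and nupos: "\<forall>i. \<nu>$i > 0"
    and rho: "\<forall>i. -1 < \<rho>$i \<and> \<rho>$i < 1"
begin

lemma rho2: "(\<rho>$i)^2 < 1"
  using rho[rule_format, of i] by (simp add: abs_square_less_1 abs_less_iff)

lemma R2_lt: "(\<Sum>j\<in>UNIV. (\<rho>$j)^2) < real CARD('n)"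
proof -
  have "(\<Sum>j\<in>UNIV. (\<rho>$j)^2) < (\<Sum>j\<in>(UNIV::'n set). 1)"
    apply (rule sum_strict_mono)
    using rho2 by auto
  then show ?thesis by simp
qed

lemma QF_nonpos_zero:
  fixes zQ :: "real^'n^'n"
  shows "inner (stack (vecm zQ) zS) (Hfull \<sigma> \<gamma>P c \<gamma> \<nu> \<rho> *v stack (vecm zQ) zS) \<le> 0"
    and "inner (stack (vecm zQ) zS) (Hfull \<sigma> \<gamma>P c \<gamma> \<nu> \<rho> *v stack (vecm zQ) zS) \<ge> 0 \<Longrightarrow> zQ = 0 \<and> zS = 0"
proof -
  define n where "n = real CARD('n)"
  define r where "r = sqrt n"
  have n: "n > 0" unfolding n_def by simp
  have kp: "1 - (\<Sum>j\<in>UNIV. (\<rho>$j)^2)/n > 0" using R2_lt n unfolding n_def by (simp add: field_simps)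
  define T3 where "T3 = (\<Sum>j\<in>UNIV. (zQ$j$j)^2 / c$j)"
  define A where "A = (\<Sum>i\<in>UNIV. \<gamma>$i * (\<Sum>j\<in>UNIV. (\<nu>$j * zQ$i$j + \<sigma>*\<rho>$j/r * zS$i)^2))"
  define G where "G = (\<Sum>k\<in>UNIV. \<gamma>$k * (zS$k)^2)"
  define B where "B = (\<Sum>i\<in>UNIV. (\<nu>$i * (\<Sum>k\<in>UNIV. zQ$k$i) + \<rho>$i*\<sigma>/r * (\<Sum>k\<in>UNIV. zS$k))^2
                    + (1 - (\<rho>$i)^2) * \<sigma>\<^sup>2 / n * (\<Sum>k\<in>UNIV. zS$k)^2)"
  have eq: "inner (stack (vecm zQ) zS) (Hfull \<sigma> \<gamma>P c \<gamma> \<nu> \<rho> *v stack (vecm zQ) zS)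
      = - 1/n * (T3 + A + \<sigma>\<^sup>2 * (1 - (\<Sum>j\<in>UNIV. (\<rho>$j)^2)/n) * G) - \<gamma>P/n^2 * B"
    unfolding QF_sos T3_def A_def G_def B_def n_def r_def ..
  have T3: "T3 \<ge> 0" unfolding T3_def using cpos by (intro sum_nonneg) (simp add: less_imp_le)
  have Ai: "\<And>i. \<gamma>$i * (\<Sum>j\<in>UNIV. (\<nu>$j * zQ$i$j + \<sigma>*\<rho>$j/r * zS$i)^2) \<ge> 0"
    using gpos by (intro mult_nonneg_nonneg sum_nonneg) (auto simp: less_imp_le)
  have A: "A \<ge> 0" unfolding A_def using Ai by (intro sum_nonneg) auto
  have Gi: "\<And>k. \<gamma>$k * (zS$k)^2 \<ge> 0" using gpos by (simp add: less_imp_le)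
  have G: "G \<ge> 0" unfolding G_def using Gi by (intro sum_nonneg) auto
  have Bi: "\<And>i. (1 - (\<rho>$i)^2) * \<sigma>\<^sup>2 / n * (\<Sum>k\<in>UNIV. zS$k)^2 \<ge> 0"
    using n by (auto intro!: mult_nonneg_nonneg divide_nonneg_pos less_imp_le[OF rho2])
  have B: "B \<ge> 0" unfolding B_def using Bi by (intro sum_nonneg add_nonneg_nonneg) auto
  have sG: "\<sigma>\<^sup>2 * (1 - (\<Sum>j\<in>UNIV. (\<rho>$j)^2)/n) * G \<ge> 0" using kp G by simp
  have X1: "- 1/n * (T3 + A + \<sigma>\<^sup>2 * (1 - (\<Sum>j\<in>UNIV. (\<rho>$j)^2)/n) * G) \<le> 0"
    using T3 A sG n by (simp add: divide_nonneg_pos)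
  have X2: "\<gamma>P/n^2 * B \<ge> 0" using gP B n by simp
  show "inner (stack (vecm zQ) zS) (Hfull \<sigma> \<gamma>P c \<gamma> \<nu> \<rho> *v stack (vecm zQ) zS) \<le> 0"
    unfolding eq using X1 X2 by linarith
  assume "inner (stack (vecm zQ) zS) (Hfull \<sigma> \<gamma>P c \<gamma> \<nu> \<rho> *v stack (vecm zQ) zS) \<ge> 0"
  then have "- 1/n * (T3 + A + \<sigma>\<^sup>2 * (1 - (\<Sum>j\<in>UNIV. (\<rho>$j)^2)/n) * G) \<ge> 0"
    unfolding eq using X2 by linarith
  then have "T3 + A + \<sigma>\<^sup>2 * (1 - (\<Sum>j\<in>UNIV. (\<rho>$j)^2)/n) * G \<le> 0"
    using n by (simp add: field_simps)
  then have A0: "A = 0" and sG0: "\<sigma>\<^sup>2 * (1 - (\<Sum>j\<in>UNIV. (\<rho>$j)^2)/n) * G = 0"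
    using T3 A sG by linarith+
  have G0: "G = 0" using sG0 kp sig by (metis less_irrefl mult_eq_0_iff power_eq_0_iff)
  have zS0: "\<And>k. zS$k = 0"
  proof -
    fix k
    have "\<gamma>$k * (zS$k)^2 = 0" using G0 unfolding G_def using sum_nonneg_eq_0_iff[of UNIV "\<lambda>k. \<gamma>$k * (zS$k)^2"] Gi by auto
    moreover have "\<gamma>$k \<noteq> 0" using gpos by (metis less_irrefl)
    ultimately show "zS$k = 0" by simp
  qed
  have zQ0: "\<And>i j. zQ$i$j = 0"
  proof -
    fix i j
    have "\<gamma>$i * (\<Sum>j\<in>UNIV. (\<nu>$j * zQ$i$j + \<sigma>*\<rho>$j/r * zS$i)^2) = 0"
      using A0 unfolding A_def using sum_nonneg_eq_0_iff[of UNIV "\<lambda>i. \<gamma>$i * (\<Sum>j\<in>UNIV. (\<nu>$j * zQ$i$j + \<sigma>*\<rho>$j/r * zS$i)^2)"] Ai by auto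
    moreover have "\<gamma>$i \<noteq> 0" using gpos by (metis less_irrefl)
    ultimately have "(\<Sum>j\<in>UNIV. (\<nu>$j * zQ$i$j)^2) = 0" using zS0 by simp
    then have "(\<nu>$j * zQ$i$j)^2 = 0" using sum_nonneg_eq_0_iff[of UNIV "\<lambda>j. (\<nu>$j * zQ$i$j)^2"] by auto
    moreover have "\<nu>$j \<noteq> 0" using nupos by (metis less_irrefl)
    ultimately show "zQ$i$j = 0" by simp
  qed
  show "zQ = 0 \<and> zS = 0" using zQ0 zS0 by (simp add: vec_eq_iff)
qed

end


context
  fixes \<sigma> \<gamma>P :: real and c \<gamma> \<nu> \<rho> :: "real^'n"
  assumes sig: "\<sigma> > 0" and gP: "\<gamma>P > 0"
    and cpos: "\<forall>i. c$i > 0" and gpos: "\<forall>i. \<gamma>$i > 0" and nupos: "\<forall>i. \<nu>$i > 0"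
    and rho: "\<forall>i. -1 < \<rho>$i \<and> \<rho>$i < 1"
begin

lemma cp: "c$i > 0" using cpos by simp
lemma gp: "\<gamma>$i > 0" using gpos by simp
lemma np: "\<nu>$i > 0" using nupos by simp

lemma A_gt: "Acoef c \<gamma> \<nu> i > \<gamma>$i"
  unfolding Acoef_def using cp[of i] np[of i] by simp

lemma A_pos: "Acoef c \<gamma> \<nu> i > 0"
  using A_gt[of i] gp[of i] by linarith

lemma gA_pos: "1 - \<gamma>$i / Acoef c \<gamma> \<nu> i > 0"
  using A_gt[of i] gp[of i] A_pos[of i] by (simp add: field_simps)

lemma kap_eq: "kappacoef \<gamma>P c \<gamma> \<nu> i = 1 + (\<Sum>l\<in>UNIV. alphacoef \<gamma>P \<gamma> l) - alphacoef \<gamma>P \<gamma> i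
   + \<gamma>P / (real CARD('n) * Acoef c \<gamma> \<nu> i)"
proof -
  have "(\<Sum>l\<in>UNIV. alphacoef \<gamma>P \<gamma> l) = \<gamma>P / real CARD('n) * (\<Sum>l\<in>UNIV. 1 / \<gamma>$l)"
    unfolding alphacoef_def by (simp add: sum_distrib_left)
  then show ?thesis unfolding kappacoef_def alphacoef_def
    using gp[of i] A_pos[of i] by (simp add: field_simps)
qed

lemma kap_pos: "kappacoef \<gamma>P c \<gamma> \<nu> i > 0"
proof -
  have a: "alphacoef \<gamma>P \<gamma> i \<le> (\<Sum>l\<in>UNIV. alphacoef \<gamma>P \<gamma> l)"
    by (rule member_le_sum) (auto simp: alphacoef_def intro!: divide_nonneg_pos less_imp_le[OF gP] mult_pos_pos gp)
  have "\<gamma>P / (real CARD('n) * Acoef c \<gamma> \<nu> i) > 0" using gP A_pos[of i] by simp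
  then show ?thesis unfolding kap_eq using a by linarith
qed

lemma mu_pos: "mucoef \<sigma> \<gamma>P c \<gamma> \<nu> \<rho> i > 0"
proof -
  define n where "n = real CARD('n)"
  have n: "n > 0" unfolding n_def by simp
  have kp: "1 - (\<Sum>j\<in>UNIV. (\<rho>$j)^2)/n > 0" using R2_lt[OF sig gP cpos gpos nupos rho] n unfolding n_def by (simp add: field_simps)
  have t: "(1 - \<gamma>$i / Acoef c \<gamma> \<nu> i) * (\<rho>$i)^2 / n \<ge> 0" using gA_pos[of i] n by simp
  have f1: "\<gamma>$i * \<sigma>\<^sup>2 / n * (1 - 1 / n * (\<Sum>j\<in>UNIV. (\<rho>$j)\<^sup>2) + (1 - \<gamma>$i / Acoef c \<gamma> \<nu> i) * (\<rho>$i)\<^sup>2 / n) > 0"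
  proof -
    have "1/n * (\<Sum>j\<in>UNIV. (\<rho>$j)\<^sup>2) = (\<Sum>j\<in>UNIV. (\<rho>$j)^2)/n" by simp
    then have "1 - 1 / n * (\<Sum>j\<in>UNIV. (\<rho>$j)\<^sup>2) + (1 - \<gamma>$i / Acoef c \<gamma> \<nu> i) * (\<rho>$i)\<^sup>2 / n > 0"
      using kp t by linarith
    then show ?thesis using gp[of i] sig n by simp
  qed
  have f2: "\<gamma>P * \<sigma>\<^sup>2 * (\<rho>$i)\<^sup>2 / (kappacoef \<gamma>P c \<gamma> \<nu> i * n ^ 3) * (1 - \<gamma>$i / Acoef c \<gamma> \<nu> i)\<^sup>2 \<ge> 0"
    using gP kap_pos[of i] n by simp
  show ?thesis unfolding mucoef_def Let_def n_def[symmetric] using f1 f2 by linarith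
qed

lemma s_pos: "svec \<sigma> \<gamma>P c \<gamma> \<nu> \<rho> $ i > 0"
  unfolding svec_def using mu_pos[of i] by simp

lemma lam_pos: "lambdacoef \<sigma> \<gamma>P \<rho> > 0"
proof -
  have "(\<Sum>j\<in>UNIV. 1 - (\<rho>$j)\<^sup>2) > 0"
    using R2_lt[OF sig gP cpos gpos nupos rho] by (simp add: sum_subtractf)
  then show ?thesis unfolding lambdacoef_def using gP sig by simp
qed

lemma den_pos: "1 + lambdacoef \<sigma> \<gamma>P \<rho> * (\<Sum>i\<in>UNIV. svec \<sigma> \<gamma>P c \<gamma> \<nu> \<rho> $ i) > 0"
proof -
  have "(\<Sum>i\<in>UNIV. svec \<sigma> \<gamma>P c \<gamma> \<nu> \<rho> $ i) \<ge> 0" using s_pos by (simp add: sum_nonneg less_imp_le)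
  then show ?thesis using lam_pos by (simp add: add_pos_nonneg)
qed

end


context
  fixes \<sigma> \<gamma>P :: real and c \<gamma> \<nu> \<rho> :: "real^'n"
  assumes sig: "\<sigma> > 0" and gP: "\<gamma>P > 0"
    and cpos: "\<forall>i. c$i > 0" and gpos: "\<forall>i. \<gamma>$i > 0" and nupos: "\<forall>i. \<nu>$i > 0"
    and rho: "\<forall>i. -1 < \<rho>$i \<and> \<rho>$i < 1"
begin

lemmas facts8 = sig gP cpos gpos nupos rho

lemma zS_comp: "zSstar \<sigma> \<gamma>P c \<gamma> \<nu> \<rho> $ k =
   svec \<sigma> \<gamma>P c \<gamma> \<nu> \<rho> $ k * ellcoef \<sigma> \<gamma>P c \<gamma> \<nu> \<rho> k
   - ycoef \<sigma> \<gamma>P c \<gamma> \<nu> \<rho> * svec \<sigma> \<gamma>P c \<gamma> \<nu> \<rho> $ k *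
     (\<Sum>j\<in>UNIV. svec \<sigma> \<gamma>P c \<gamma> \<nu> \<rho> $ j * ellcoef \<sigma> \<gamma>P c \<gamma> \<nu> \<rho> j)"
  unfolding zSstar_def Let_def
  by (simp add: matrix_vector_mult_def Diag_def ellvec_def left_diff_distrib right_diff_distrib sum_subtractf
      ifz_mult mult_ifz sum_distrib_left mult_ac)

lemma zS_rel: "mucoef \<sigma> \<gamma>P c \<gamma> \<nu> \<rho> k * zSstar \<sigma> \<gamma>P c \<gamma> \<nu> \<rho> $ k =
   ellcoef \<sigma> \<gamma>P c \<gamma> \<nu> \<rho> k - lambdacoef \<sigma> \<gamma>P \<rho> * (\<Sum>l\<in>UNIV. zSstar \<sigma> \<gamma>P c \<gamma> \<nu> \<rho> $ l)"
proof -
  define s where "s = svec \<sigma> \<gamma>P c \<gamma> \<nu> \<rho>"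
  define l where "l = ellcoef \<sigma> \<gamma>P c \<gamma> \<nu> \<rho>"
  define y where "y = ycoef \<sigma> \<gamma>P c \<gamma> \<nu> \<rho>"
  define lam where "lam = lambdacoef \<sigma> \<gamma>P \<rho>"
  define SL where "SL = (\<Sum>j\<in>UNIV. s $ j * l j)"
  define Ss where "Ss = (\<Sum>j\<in>UNIV. s $ j)"
  have zc: "\<And>k. zSstar \<sigma> \<gamma>P c \<gamma> \<nu> \<rho> $ k = s$k * l k - y * s$k * SL"
    unfolding s_def l_def y_def SL_def by (rule zS_comp)
  have S: "(\<Sum>l\<in>UNIV. zSstar \<sigma> \<gamma>P c \<gamma> \<nu> \<rho> $ l) = SL - y * Ss * SL"
    unfolding zc Ss_def sum_subtractf SL_def[symmetric] by (simp add: sum_distrib_left sum_distrib_right)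
  have den: "1 + lam * Ss > 0" unfolding lam_def Ss_def s_def by (rule den_pos[OF facts8])
  have y: "y = lam / (1 + lam * Ss)" unfolding y_def ycoef_def lam_def Ss_def s_def ..
  have ms: "mucoef \<sigma> \<gamma>P c \<gamma> \<nu> \<rho> k * s$k = 1" unfolding s_def svec_def using mu_pos[OF facts8, of k] by simp
  have "mucoef \<sigma> \<gamma>P c \<gamma> \<nu> \<rho> k * zSstar \<sigma> \<gamma>P c \<gamma> \<nu> \<rho> $ k = l k - y * SL"
    unfolding zc using ms by (simp add: algebra_simps)
  also have "\<dots> = l k - lam * (SL - y * Ss * SL)"
    using den unfolding y by (simp add: field_simps)
  finally show ?thesis unfolding S l_def lam_def .
qed

lemma K_kap: "Kfun \<sigma> \<gamma>P c \<gamma> \<nu> \<rho> j zS * kappacoef \<gamma>P c \<gamma> \<nu> j =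
   \<nu>$j - 1 / (c$j * \<nu>$j * Acoef c \<gamma> \<nu> j) - \<sigma> / sqrt (real CARD('n)) * \<rho>$j * (1 - \<gamma>$j / Acoef c \<gamma> \<nu> j) * zS$j"
  unfolding Kfun_def dcoef_def mcoef_def using kap_pos[OF facts8, of j]
  by (simp add: field_simps)

end


context
  fixes \<sigma> \<gamma>P :: real and c \<gamma> \<nu> \<rho> :: "real^'n"
  assumes sig: "\<sigma> > 0" and gP: "\<gamma>P > 0"
    and cpos: "\<forall>i. c$i > 0" and gpos: "\<forall>i. \<gamma>$i > 0" and nupos: "\<forall>i. \<nu>$i > 0"
    and rho: "\<forall>i. -1 < \<rho>$i \<and> \<rho>$i < 1"
begin

lemmas facts9 = sig gP cpos gpos nupos rho

abbreviation "zz \<equiv> zSstar \<sigma> \<gamma>P c \<gamma> \<nu> \<rho>"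
abbreviation "qq \<equiv> qstar \<sigma> \<gamma>P c \<gamma> \<nu> \<rho>"
abbreviation "KK j \<equiv> Kfun \<sigma> \<gamma>P c \<gamma> \<nu> \<rho> j zz"

lemma q_off: "i \<noteq> j \<Longrightarrow> qq i j = alphacoef \<gamma>P \<gamma> i * KK j - \<sigma> / sqrt (real CARD('n)) * \<rho>$j * zz$i"
  unfolding qstar_def Let_def by simp

lemma q_diag: "qq j j = (1 / Acoef c \<gamma> \<nu> j) * (\<gamma>P / real CARD('n) * KK j
            - \<gamma>$j * \<sigma> / sqrt (real CARD('n)) * \<rho>$j * zz$j + 1 / (c$j * \<nu>$j))"
  unfolding qstar_def Let_def by simp

lemma sum_minus_one: "(\<Sum>i\<in>UNIV - {j}. f i) = (\<Sum>i\<in>UNIV. f i) - (f j :: real)" for f :: "'a::finite \<Rightarrow> real"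
  using sum.remove[of UNIV j f] by simp

lemma col: "(\<Sum>i\<in>UNIV. qq i j) = \<nu>$j - \<sigma> * \<rho>$j / sqrt (real CARD('n)) * (\<Sum>l\<in>UNIV. zz$l) - KK j"
proof -
  define n where "n = real CARD('n)"
  define r where "r = sqrt n"
  have n: "n > 0" unfolding n_def by simp
  have r: "r > 0" unfolding r_def using n by simp
  define SA where "SA = (\<Sum>l\<in>UNIV. alphacoef \<gamma>P \<gamma> l)"
  define S where "S = (\<Sum>l\<in>UNIV. zz$l)"
  have "(\<Sum>i\<in>UNIV. qq i j) = qq j j + (\<Sum>i\<in>UNIV - {j}. qq i j)"
    by (simp add: sum.remove)
  also have "(\<Sum>i\<in>UNIV - {j}. qq i j) = (\<Sum>i\<in>UNIV - {j}. alphacoef \<gamma>P \<gamma> i * KK j - \<sigma> / r * \<rho>$j * zz$i)"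
    by (rule sum.cong) (auto simp: q_off r_def n_def)
  also have "\<dots> = (SA - alphacoef \<gamma>P \<gamma> j) * KK j - \<sigma> / r * \<rho>$j * (S - zz$j)"
    unfolding sum_minus_one SA_def S_def by (simp add: sum_subtractf sum_distrib_right sum_distrib_left algebra_simps)
  finally have e: "(\<Sum>i\<in>UNIV. qq i j) = qq j j + ((SA - alphacoef \<gamma>P \<gamma> j) * KK j - \<sigma> / r * \<rho>$j * (S - zz$j))" .
  have kap: "kappacoef \<gamma>P c \<gamma> \<nu> j = 1 + SA - alphacoef \<gamma>P \<gamma> j + \<gamma>P / (n * Acoef c \<gamma> \<nu> j)"
    unfolding SA_def n_def by (rule kap_eq[OF facts9])
  define kk where "kk = kappacoef \<gamma>P c \<gamma> \<nu> j"
  have SAe: "SA = kk - 1 + alphacoef \<gamma>P \<gamma> j - \<gamma>P / (n * Acoef c \<gamma> \<nu> j)"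
    using kap unfolding kk_def by simp
  have kp: "kk \<noteq> 0" using kap_pos[OF facts9, of j] unfolding kk_def by simp
  have Kv: "KK j = (\<nu>$j - 1 / (c$j * \<nu>$j * Acoef c \<gamma> \<nu> j) - \<sigma> / r * \<rho>$j * (1 - \<gamma>$j / Acoef c \<gamma> \<nu> j) * zz$j) / kk"
    using K_kap[OF facts9, of j zz] kp unfolding kk_def r_def n_def by (simp add: field_simps)
  have A: "Acoef c \<gamma> \<nu> j \<noteq> 0" using A_pos[OF facts9, of j] by simp
  have cn: "c$j \<noteq> 0" "\<nu>$j \<noteq> 0" using cp[OF facts9, of j] np[OF facts9, of j] by auto
  show ?thesis
    unfolding e q_diag n_def[symmetric] r_def[symmetric] S_def[symmetric] SAe Kv
    using kp A cn n r by (simp add: field_simps)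
qed

end


context
  fixes \<sigma> \<gamma>P :: real and c \<gamma> \<nu> \<rho> :: "real^'n"
  assumes sig: "\<sigma> > 0" and gP: "\<gamma>P > 0"
    and cpos: "\<forall>i. c$i > 0" and gpos: "\<forall>i. \<gamma>$i > 0" and nupos: "\<forall>i. \<nu>$i > 0"
    and rho: "\<forall>i. -1 < \<rho>$i \<and> \<rho>$i < 1"
begin

lemmas facts10 = sig gP cpos gpos nupos rho

abbreviation "zZ \<equiv> zSstar \<sigma> \<gamma>P c \<gamma> \<nu> \<rho>"
abbreviation "qQ \<equiv> qstar \<sigma> \<gamma>P c \<gamma> \<nu> \<rho>"
abbreviation "kK j \<equiv> Kfun \<sigma> \<gamma>P c \<gamma> \<nu> \<rho> j zZ"

lemma zQ_nth: "zQstar \<sigma> \<gamma>P c \<gamma> \<nu> \<rho> $ i $ j = qQ i j / \<nu>$j"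
  unfolding zQstar_def by simp

lemma colQ: "(\<Sum>k\<in>UNIV. zQstar \<sigma> \<gamma>P c \<gamma> \<nu> \<rho> $ k $ j) = (\<nu>$j - \<sigma> * \<rho>$j / sqrt (real CARD('n)) * (\<Sum>l\<in>UNIV. zZ$l) - kK j) / \<nu>$j"
  unfolding zQ_nth sum_divide_distrib[symmetric] col[OF facts10] ..

lemma Qeq: "(Hfull \<sigma> \<gamma>P c \<gamma> \<nu> \<rho> *v stack (vecm (zQstar \<sigma> \<gamma>P c \<gamma> \<nu> \<rho>)) zZ) $ Inl (i,j)
   = - bfull \<sigma> \<gamma>P c \<nu> \<rho> $ Inl (i,j)"
proof -
  define n where "n = real CARD('n)"
  define r where "r = sqrt n"
  have n: "n > 0" unfolding n_def by simp
  have r: "r > 0" unfolding r_def using n by simp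
  have p3: "n powr (3/2) = n * r" using powr32[OF n] r_def by simp
  have p5: "n powr (5/2) = n^2 * r" using powr52[OF n] r_def by simp
  have b: "bfull \<sigma> \<gamma>P c \<nu> \<rho> $ Inl (i,j) = (if i = j then 1 / (n * c$i) else 0) + \<gamma>P / n\<^sup>2 * (\<nu>$j)\<^sup>2"
    unfolding bfull_def bQ_def Let_def n_def by simp
  have g: "\<gamma>$i \<noteq> 0" "\<nu>$j \<noteq> 0" "c$j \<noteq> 0" using gp[OF facts10, of i] np[OF facts10, of j] cp[OF facts10, of j] by auto
  show ?thesis
  proof (cases "i = j")
    case True
    define AA where "AA = Acoef c \<gamma> \<nu> j"
    have A: "AA \<noteq> 0" using A_pos[OF facts10, of j] unfolding AA_def by simp
    have ge: "\<gamma>$j = AA - 1 / (c$j * (\<nu>$j)^2)" unfolding AA_def Acoef_def by simp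
    show ?thesis
      unfolding True HQ_comp colQ
      unfolding b[unfolded True] n_def[symmetric] r_def[symmetric] p3 p5 zQ_nth
      unfolding q_diag[OF facts10] n_def[symmetric] r_def[symmetric] AA_def[symmetric]
      unfolding ge
      using g A n r by (simp add: field_simps power2_eq_square)
  next
    case False
    show ?thesis
      unfolding HQ_comp colQ
      unfolding b n_def[symmetric] r_def[symmetric] p3 p5 zQ_nth
      using False g n r by (simp add: q_off[OF facts10] n_def[symmetric] r_def[symmetric] alphacoef_def field_simps power2_eq_square)
  qed
qed

lemma Rk: "(\<Sum>j\<in>UNIV. \<rho>$j * \<nu>$j * zQstar \<sigma> \<gamma>P c \<gamma> \<nu> \<rho> $ k $ j)
   = \<rho>$k * qQ k k + alphacoef \<gamma>P \<gamma> k * ((\<Sum>j\<in>UNIV. \<rho>$j * kK j) - \<rho>$k * kK k)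
     - \<sigma> / sqrt (real CARD('n)) * zZ$k * ((\<Sum>j\<in>UNIV. (\<rho>$j)^2) - (\<rho>$k)^2)"
proof -
  have "(\<Sum>j\<in>UNIV. \<rho>$j * \<nu>$j * zQstar \<sigma> \<gamma>P c \<gamma> \<nu> \<rho> $ k $ j) = (\<Sum>j\<in>UNIV. \<rho>$j * qQ k j)"
    unfolding zQ_nth using np[OF facts10] by (intro sum.cong) (auto simp: less_imp_neq[symmetric])
  also have "\<dots> = \<rho>$k * qQ k k + (\<Sum>j\<in>UNIV - {k}. \<rho>$j * qQ k j)"
    by (simp add: sum.remove)
  also have "(\<Sum>j\<in>UNIV - {k}. \<rho>$j * qQ k j) = (\<Sum>j\<in>UNIV - {k}. \<rho>$j * (alphacoef \<gamma>P \<gamma> k * kK j - \<sigma> / sqrt (real CARD('n)) * \<rho>$j * zZ$k))"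
    by (rule sum.cong) (auto simp: q_off[OF facts10])
  also have "\<dots> = alphacoef \<gamma>P \<gamma> k * ((\<Sum>j\<in>UNIV. \<rho>$j * kK j) - \<rho>$k * kK k)
     - \<sigma> / sqrt (real CARD('n)) * zZ$k * ((\<Sum>j\<in>UNIV. (\<rho>$j)^2) - (\<rho>$k)^2)"
    unfolding sum_minus_one[OF facts10] by (simp add: sum_subtractf sum_distrib_left right_diff_distrib algebra_simps power2_eq_square sum_divide_distrib)
  finally show ?thesis by simp
qed

lemma Pp: "(\<Sum>i\<in>UNIV. \<Sum>j\<in>UNIV. \<rho>$j * \<nu>$j * zQstar \<sigma> \<gamma>P c \<gamma> \<nu> \<rho> $ i $ j)
   = (\<Sum>j\<in>UNIV. \<rho>$j * \<nu>$j) - \<sigma> / sqrt (real CARD('n)) * (\<Sum>l\<in>UNIV. zZ$l) * (\<Sum>j\<in>UNIV. (\<rho>$j)^2)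
     - (\<Sum>j\<in>UNIV. \<rho>$j * kK j)"
proof -
  have "(\<Sum>i\<in>UNIV. \<Sum>j\<in>UNIV. \<rho>$j * \<nu>$j * zQstar \<sigma> \<gamma>P c \<gamma> \<nu> \<rho> $ i $ j)
     = (\<Sum>j\<in>UNIV. \<rho>$j * \<nu>$j * (\<Sum>i\<in>UNIV. zQstar \<sigma> \<gamma>P c \<gamma> \<nu> \<rho> $ i $ j))"
    by (subst sum.swap) (simp add: sum_distrib_left)
  also have "\<dots> = (\<Sum>j\<in>UNIV. \<rho>$j * (\<nu>$j - \<sigma> * \<rho>$j / sqrt (real CARD('n)) * (\<Sum>l\<in>UNIV. zZ$l) - kK j))"
    unfolding colQ using np[OF facts10] by (intro sum.cong) (auto simp: less_imp_neq[symmetric])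
  also have "\<dots> = (\<Sum>j\<in>UNIV. \<rho>$j * \<nu>$j) - \<sigma> / sqrt (real CARD('n)) * (\<Sum>l\<in>UNIV. zZ$l) * (\<Sum>j\<in>UNIV. (\<rho>$j)^2)
     - (\<Sum>j\<in>UNIV. \<rho>$j * kK j)"
  proof -
    have "(\<Sum>j\<in>UNIV. \<rho>$j * (\<sigma> * \<rho>$j / sqrt (real CARD('n)) * (\<Sum>l\<in>UNIV. zZ$l)))
       = \<sigma> / sqrt (real CARD('n)) * (\<Sum>l\<in>UNIV. zZ$l) * (\<Sum>j\<in>UNIV. (\<rho>$j)^2)"
    proof -
      have "(\<Sum>j\<in>UNIV. \<rho>$j * (\<sigma> * \<rho>$j / sqrt (real CARD('n)) * (\<Sum>l\<in>UNIV. zZ$l)))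
         = (\<sigma> * (\<Sum>l\<in>UNIV. zZ$l)) * (\<Sum>j\<in>UNIV. (\<rho>$j)^2) / sqrt (real CARD('n))"
        by (rule sum1_cm) (simp add: power2_eq_square)
      then show ?thesis by simp
    qed
    then show ?thesis by (simp add: sum_subtractf right_diff_distrib)
  qed
  finally show ?thesis .
qed

lemma Seq: "(Hfull \<sigma> \<gamma>P c \<gamma> \<nu> \<rho> *v stack (vecm (zQstar \<sigma> \<gamma>P c \<gamma> \<nu> \<rho>)) zZ) $ Inr k
   = - bfull \<sigma> \<gamma>P c \<nu> \<rho> $ Inr k" (is "?L = ?R")
proof -
  define n where "n = real CARD('n)"
  define r where "r = sqrt n"
  have n: "n > 0" unfolding n_def by simp
  have r: "r > 0" unfolding r_def using n by simp
  have rr: "n = r^2" unfolding r_def using n by simp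
  have p3: "n powr (3/2) = n * r" using powr32[OF n] r_def by simp
  have p5: "n powr (5/2) = n^2 * r" using powr52[OF n] r_def by simp
  define S where "S = (\<Sum>l\<in>UNIV. zZ$l)"
  define R2 where "R2 = (\<Sum>j\<in>UNIV. (\<rho>$j)^2)"
  define PK where "PK = (\<Sum>j\<in>UNIV. \<rho>$j * kK j)"
  define SRN where "SRN = (\<Sum>j\<in>UNIV. \<rho>$j * \<nu>$j)"
  define AA where "AA = Acoef c \<gamma> \<nu> k"
  define kk where "kk = kappacoef \<gamma>P c \<gamma> \<nu> k"
  define dd where "dd = dcoef \<gamma>P c \<gamma> \<nu> k"
  have A: "AA \<noteq> 0" using A_pos[OF facts10, of k] unfolding AA_def by simp
  have kp: "kk \<noteq> 0" using kap_pos[OF facts10, of k] unfolding kk_def by simp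
  have g: "\<gamma>$k \<noteq> 0" "\<nu>$k \<noteq> 0" "c$k \<noteq> 0" using gp[OF facts10, of k] np[OF facts10, of k] cp[OF facts10, of k] by auto
  have lam: "lambdacoef \<sigma> \<gamma>P \<rho> = \<gamma>P * \<sigma>\<^sup>2 / n^3 * (n - R2)"
    unfolding lambdacoef_def R2_def n_def by (simp add: sum_subtractf)
  have rel: "mucoef \<sigma> \<gamma>P c \<gamma> \<nu> \<rho> k * zZ $ k = ellcoef \<sigma> \<gamma>P c \<gamma> \<nu> \<rho> k - lambdacoef \<sigma> \<gamma>P \<rho> * S"
    unfolding S_def by (rule zS_rel[OF facts10])
  have bS: "?R = - (\<gamma>P * \<sigma> / (n^2 * r) * SRN)"
    unfolding bfull_def bS_def Let_def SRN_def n_def[symmetric] p5 by simp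
  have alg: "?L - ?R = ellcoef \<sigma> \<gamma>P c \<gamma> \<nu> \<rho> k - mucoef \<sigma> \<gamma>P c \<gamma> \<nu> \<rho> k * zZ $ k - lambdacoef \<sigma> \<gamma>P \<rho> * S"
    unfolding bS
    unfolding HS_comp
    unfolding Pp
    unfolding Rk
    unfolding n_def[symmetric] r_def[symmetric] p3 p5 S_def[symmetric] R2_def[symmetric] PK_def[symmetric] SRN_def[symmetric]
    unfolding lam mucoef_def ellcoef_def Let_def n_def[symmetric] r_def[symmetric] p3 p5
    unfolding q_diag[OF facts10] n_def[symmetric] r_def[symmetric]
    unfolding Kfun_def mcoef_def n_def[symmetric] r_def[symmetric] alphacoef_def
    unfolding AA_def[symmetric] kk_def[symmetric] dd_def[symmetric] R2_def[symmetric] S_def[symmetric]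
    unfolding rr
    using A kp g r apply (simp add: field_simps power2_eq_square)
    by algebra
  show ?thesis using alg rel by simp
qed

end


definition Tm :: "(real^'n^'n) \<times> (real^'n) \<Rightarrow> real^(('n \<times> 'n) + 'n)" where
  "Tm w = stack (vecm (fst w)) (snd w)"

lemma Tm_add: "Tm (a + b) = Tm a + Tm b"
  by (simp add: Tm_def vec_eq_iff stack_def vecm_def split: sum.split)

lemma Tm_scale: "Tm (r *\<^sub>R a) = r *\<^sub>R Tm a"
  by (simp add: Tm_def vec_eq_iff stack_def vecm_def split: sum.split)

lemma Tm_linear: "linear Tm"
  by (rule linearI) (simp_all add: Tm_add Tm_scale)

lemma Tm_bl: "bounded_linear Tm"
  using Tm_linear linear_conv_bounded_linear by blast

lemma Tm_unst: "Tm (unst X) = X"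
  unfolding Tm_def by (rule stack_unst)

lemma unst_Tm: "unst (Tm w) = w"
  unfolding Tm_def by (simp add: unst_stack)

lemma Tm_inj: "Tm a = Tm b \<Longrightarrow> a = b"
  by (metis unst_Tm)

lemma Hsym: "Hfull \<sigma> \<gamma>P c \<gamma> \<nu> \<rho> $ a $ b = Hfull \<sigma> \<gamma>P c \<gamma> \<nu> \<rho> $ b $ a"
proof (cases a; cases b)
  fix p q assume "a = Inl p" "b = Inl q"
  then show ?thesis
    by (cases p; cases q) (auto simp: Hfull_def blockmat_def HQQ_entry)
next
  fix p k assume "a = Inl p" "b = Inr k"
  then show ?thesis by (simp add: Hfull_def blockmat_def)
next
  fix p k assume "a = Inr k" "b = Inl p"
  then show ?thesis by (simp add: Hfull_def blockmat_def)
next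
  fix k l assume "a = Inr k" "b = Inr l"
  then show ?thesis by (auto simp: Hfull_def blockmat_def HSS_entry)
qed

lemma inner_H_sym: "inner x (Hfull \<sigma> \<gamma>P c \<gamma> \<nu> \<rho> *v y) = inner y (Hfull \<sigma> \<gamma>P c \<gamma> \<nu> \<rho> *v x)"
proof -
  have "inner x (Hfull \<sigma> \<gamma>P c \<gamma> \<nu> \<rho> *v y) = (\<Sum>a\<in>UNIV. \<Sum>b\<in>UNIV. x$a * Hfull \<sigma> \<gamma>P c \<gamma> \<nu> \<rho> $ a $ b * y$b)"
    by (simp add: inner_vec_def matrix_vector_mult_def sum_distrib_left mult_ac)
  also have "\<dots> = (\<Sum>b\<in>UNIV. \<Sum>a\<in>UNIV. y$b * Hfull \<sigma> \<gamma>P c \<gamma> \<nu> \<rho> $ b $ a * x$a)"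
    by (subst sum.swap) (simp add: Hsym[of \<sigma> \<gamma>P c \<gamma> \<nu> \<rho> _ _] mult_ac)
  also have "\<dots> = inner y (Hfull \<sigma> \<gamma>P c \<gamma> \<nu> \<rho> *v x)"
    by (simp add: inner_vec_def matrix_vector_mult_def sum_distrib_left mult_ac)
  finally show ?thesis .
qed

lemma sol: 
  fixes \<sigma> \<gamma>P :: real and c \<gamma> \<nu> \<rho> :: "real^'n"
  assumes "\<sigma> > 0" and "\<gamma>P > 0"
    and "\<forall>i. c$i > 0" and "\<forall>i. \<gamma>$i > 0" and "\<forall>i. \<nu>$i > 0"
    and "\<forall>i. -1 < \<rho>$i \<and> \<rho>$i < 1"
  shows "Hfull \<sigma> \<gamma>P c \<gamma> \<nu> \<rho> *v stack (vecm (zQstar \<sigma> \<gamma>P c \<gamma> \<nu> \<rho>)) (zSstar \<sigma> \<gamma>P c \<gamma> \<nu> \<rho>)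
          = - bfull \<sigma> \<gamma>P c \<nu> \<rho>"
proof -
  have "\<And>a. (Hfull \<sigma> \<gamma>P c \<gamma> \<nu> \<rho> *v stack (vecm (zQstar \<sigma> \<gamma>P c \<gamma> \<nu> \<rho>)) (zSstar \<sigma> \<gamma>P c \<gamma> \<nu> \<rho>)) $ a
          = (- bfull \<sigma> \<gamma>P c \<nu> \<rho>) $ a"
  proof -
    fix a :: "('n \<times> 'n) + 'n"
    show "(Hfull \<sigma> \<gamma>P c \<gamma> \<nu> \<rho> *v stack (vecm (zQstar \<sigma> \<gamma>P c \<gamma> \<nu> \<rho>)) (zSstar \<sigma> \<gamma>P c \<gamma> \<nu> \<rho>)) $ a
          = (- bfull \<sigma> \<gamma>P c \<nu> \<rho>) $ a"
    proof (cases a)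
      case (Inl p)
      then show ?thesis using Qeq[OF assms, of "fst p" "snd p"] by simp
    next
      case (Inr k)
      then show ?thesis using Seq[OF assms, of k] by simp
    qed
  qed
  then show ?thesis by (simp add: vec_eq_iff)
qed



definition Gq :: "real \<Rightarrow> real \<Rightarrow> real^'n \<Rightarrow> real^'n \<Rightarrow> real^'n \<Rightarrow> real^'n \<Rightarrow> real^(('n \<times> 'n) + 'n) \<Rightarrow> real" where
  "Gq \<sigma> \<gamma>P c \<gamma> \<nu> \<rho> X = 1/2 * inner X (Hfull \<sigma> \<gamma>P c \<gamma> \<nu> \<rho> *v X) + inner (bfull \<sigma> \<gamma>P c \<nu> \<rho>) X
     - \<gamma>P/(2*(real CARD('n))^2) * (\<Sum>i\<in>UNIV. (\<nu>$i)^2)"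

lemma F_Gq: "fobj \<sigma> \<gamma>P c \<gamma> \<nu> \<rho> (fst w) (snd w) = Gq \<sigma> \<gamma>P c \<gamma> \<nu> \<rho> (Tm w)"
  unfolding Gq_def Tm_def by (rule fobj_quad)

lemma Gq_exp: "Gq \<sigma> \<gamma>P c \<gamma> \<nu> \<rho> (X + h) = Gq \<sigma> \<gamma>P c \<gamma> \<nu> \<rho> X
   + inner (Hfull \<sigma> \<gamma>P c \<gamma> \<nu> \<rho> *v X + bfull \<sigma> \<gamma>P c \<nu> \<rho>) h + 1/2 * inner h (Hfull \<sigma> \<gamma>P c \<gamma> \<nu> \<rho> *v h)"
proof -
  have s: "inner X (Hfull \<sigma> \<gamma>P c \<gamma> \<nu> \<rho> *v h) = inner (Hfull \<sigma> \<gamma>P c \<gamma> \<nu> \<rho> *v X) h"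
    by (simp add: inner_H_sym inner_commute)
  have s2: "inner h (Hfull \<sigma> \<gamma>P c \<gamma> \<nu> \<rho> *v X) = inner (Hfull \<sigma> \<gamma>P c \<gamma> \<nu> \<rho> *v X) h"
    by (simp add: inner_commute)
  have s3: "inner (bfull \<sigma> \<gamma>P c \<nu> \<rho>) h = inner h (bfull \<sigma> \<gamma>P c \<nu> \<rho>)" by (simp add: inner_commute)
  show ?thesis
    unfolding Gq_def matrix_vector_right_distrib inner_add_left inner_add_right s s2
    by (simp add: algebra_simps inner_commute)
qed

theorem mainTheorem1:
  fixes \<sigma> \<gamma>P :: real and c \<gamma> \<nu> \<rho> :: "real^'n"
  assumes "\<sigma> > 0" and "\<gamma>P > 0"
    and "\<forall>i. c$i > 0" and "\<forall>i. \<gamma>$i > 0" and "\<forall>i. \<nu>$i > 0"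
    and "\<forall>i. -1 < \<rho>$i \<and> \<rho>$i < 1"
  shows "(\<exists>!z. \<forall>w. fobj \<sigma> \<gamma>P c \<gamma> \<nu> \<rho> (fst w) (snd w) \<le> fobj \<sigma> \<gamma>P c \<gamma> \<nu> \<rho> (fst z) (snd z))
    \<and> (\<forall>zQ zS. GDERIV (\<lambda>w. fobj \<sigma> \<gamma>P c \<gamma> \<nu> \<rho> (fst w) (snd w)) (zQ, zS) :> 0
          \<longleftrightarrow> Hfull \<sigma> \<gamma>P c \<gamma> \<nu> \<rho> *v stack (vecm zQ) zS = - bfull \<sigma> \<gamma>P c \<nu> \<rho>)
    \<and> (\<exists>!x. Hfull \<sigma> \<gamma>P c \<gamma> \<nu> \<rho> *v x = - bfull \<sigma> \<gamma>P c \<nu> \<rho>)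
    \<and> Hfull \<sigma> \<gamma>P c \<gamma> \<nu> \<rho> *v stack (vecm (zQstar \<sigma> \<gamma>P c \<gamma> \<nu> \<rho>)) (zSstar \<sigma> \<gamma>P c \<gamma> \<nu> \<rho>)
          = - bfull \<sigma> \<gamma>P c \<nu> \<rho>
    \<and> (\<forall>w. fobj \<sigma> \<gamma>P c \<gamma> \<nu> \<rho> (fst w) (snd w)
          \<le> fobj \<sigma> \<gamma>P c \<gamma> \<nu> \<rho> (zQstar \<sigma> \<gamma>P c \<gamma> \<nu> \<rho>) (zSstar \<sigma> \<gamma>P c \<gamma> \<nu> \<rho>))"
proof -
  let ?H = "Hfull \<sigma> \<gamma>P c \<gamma> \<nu> \<rho>"
  let ?b = "bfull \<sigma> \<gamma>P c \<nu> \<rho>"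
  let ?F = "\<lambda>w. fobj \<sigma> \<gamma>P c \<gamma> \<nu> \<rho> (fst w) (snd w)"
  let ?G = "Gq \<sigma> \<gamma>P c \<gamma> \<nu> \<rho>"
  define zs where "zs = (zQstar \<sigma> \<gamma>P c \<gamma> \<nu> \<rho>, zSstar \<sigma> \<gamma>P c \<gamma> \<nu> \<rho>)"
  define Xs where "Xs = Tm zs"
  have solX: "?H *v Xs = - ?b" unfolding Xs_def zs_def Tm_def using sol[OF assms] by simp
  have grad0: "?H *v Xs + ?b = 0" using solX by simp
  have neg1: "\<And>X. inner X (?H *v X) \<le> 0"
  proof -
    fix X
    show "inner X (?H *v X) \<le> 0"
      using QF_nonpos_zero(1)[OF assms, of "fst (unst X)" "snd (unst X)"] unfolding stack_unst .
  qed
  have neg2: "\<And>X. inner X (?H *v X) \<ge> 0 \<Longrightarrow> X = 0"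
  proof -
    fix X assume h: "inner X (?H *v X) \<ge> 0"
    have "fst (unst X) = 0 \<and> snd (unst X) = 0"
      using QF_nonpos_zero(2)[OF assms, of "fst (unst X)" "snd (unst X)"] h unfolding stack_unst by blast
    then have "stack (vecm (fst (unst X))) (snd (unst X)) = 0" using stack_zero_iff by blast
    then show "X = 0" unfolding stack_unst .
  qed
  have Fexp: "\<And>w. ?F w = ?F zs + 1/2 * inner (Tm w - Xs) (?H *v (Tm w - Xs))"
  proof -
    fix w
    have "?F w = ?G (Xs + (Tm w - Xs))" unfolding F_Gq by simp
    also have "\<dots> = ?G Xs + 1/2 * inner (Tm w - Xs) (?H *v (Tm w - Xs))"
      unfolding Gq_exp grad0 by simp
    also have "?G Xs = ?F zs" unfolding F_Gq Xs_def ..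
    finally show "?F w = ?F zs + 1/2 * inner (Tm w - Xs) (?H *v (Tm w - Xs))" .
  qed
  have maxle: "\<And>w. ?F w \<le> ?F zs"
    using Fexp neg1 by (metis add_le_same_cancel1 mult_le_0_iff zero_le_divide_1_iff zero_le_numeral) 
  have P1: "\<exists>!z. \<forall>w. ?F w \<le> ?F z"
  proof (rule ex1I[of _ zs])
    show "\<forall>w. ?F w \<le> ?F zs" using maxle by blast
  next
    fix z assume "\<forall>w. ?F w \<le> ?F z"
    then have "?F zs \<le> ?F z" by blast
    then have "inner (Tm z - Xs) (?H *v (Tm z - Xs)) \<ge> 0" using Fexp[of z] by simp
    then have "Tm z - Xs = 0" by (rule neg2)
    then have "Tm z = Tm zs" unfolding Xs_def by simp
    then show "z = zs" by (rule Tm_inj)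
  qed
  have P3: "\<exists>!x. ?H *v x = - ?b"
  proof (rule ex1I[of _ Xs])
    show "?H *v Xs = - ?b" by (rule solX)
  next
    fix x assume "?H *v x = - ?b"
    then have "?H *v (x - Xs) = 0" using solX by (simp add: matrix_vector_mult_diff_distrib)
    then have "inner (x - Xs) (?H *v (x - Xs)) \<ge> 0" by simp
    then have "x - Xs = 0" by (rule neg2)
    then show "x = Xs" by simp
  qed
  have P2: "\<forall>zQ zS. GDERIV ?F (zQ, zS) :> 0 \<longleftrightarrow> ?H *v stack (vecm zQ) zS = - ?b"
  proof (intro allI)
    fix zQ :: "real^'n^'n" and zS :: "real^'n"
    define z where "z = (zQ, zS)"
    have Tz: "Tm z = stack (vecm zQ) zS" unfolding z_def Tm_def by simp
    have dT: "(Tm has_derivative Tm) (at z)" by (rule bounded_linear_imp_has_derivative[OF Tm_bl])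
    have blHT: "bounded_linear (\<lambda>w. ?H *v Tm w)"
      by (rule bounded_linear_compose[OF matrix_vector_mul_bounded_linear Tm_bl])
    have dHT: "((\<lambda>w. ?H *v Tm w) has_derivative (\<lambda>w. ?H *v Tm w)) (at z)"
      by (rule bounded_linear_imp_has_derivative[OF blHT])
    have d1: "((\<lambda>w. inner (Tm w) (?H *v Tm w)) has_derivative
        (\<lambda>h. inner (Tm z) (?H *v Tm h) + inner (Tm h) (?H *v Tm z))) (at z)"
      by (rule has_derivative_inner[OF dT dHT])
    have d2: "((\<lambda>w. inner ?b (Tm w)) has_derivative (\<lambda>h. inner ?b (Tm h))) (at z)"
      by (rule has_derivative_inner_right[OF dT])
    have d3: "((\<lambda>w. ?G (Tm w)) has_derivative
        (\<lambda>h. 1/2 * (inner (Tm z) (?H *v Tm h) + inner (Tm h) (?H *v Tm z)) + inner ?b (Tm h) - 0)) (at z)"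
      unfolding Gq_def
      by (intro has_derivative_diff has_derivative_add has_derivative_mult_right d1 d2 has_derivative_const)
    have Deq: "(\<lambda>h. 1/2 * (inner (Tm z) (?H *v Tm h) + inner (Tm h) (?H *v Tm z)) + inner ?b (Tm h) - 0)
        = (\<lambda>h. inner (?H *v Tm z + ?b) (Tm h))"
    proof
      fix h
      have "inner (Tm z) (?H *v Tm h) = inner (Tm h) (?H *v Tm z)" by (rule inner_H_sym)
      then show "1/2 * (inner (Tm z) (?H *v Tm h) + inner (Tm h) (?H *v Tm z)) + inner ?b (Tm h) - 0
          = inner (?H *v Tm z + ?b) (Tm h)"
        by (simp add: inner_add_left inner_add_right inner_commute)
    qed
    have Feq: "?F = (\<lambda>w. ?G (Tm w))" by (rule ext) (rule F_Gq)
    have fder: "(?F has_derivative (\<lambda>h. inner (?H *v Tm z + ?b) (Tm h))) (at z)"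
      unfolding Feq using d3 Deq by simp
    show "GDERIV ?F (zQ, zS) :> 0 \<longleftrightarrow> ?H *v stack (vecm zQ) zS = - ?b"
    proof
      assume "GDERIV ?F (zQ, zS) :> 0"
      then have "(?F has_derivative (\<lambda>h. 0)) (at z)" unfolding gderiv_def z_def by simp
      then have "(\<lambda>h. inner (?H *v Tm z + ?b) (Tm h)) = (\<lambda>h. 0)"
        using fder has_derivative_unique by blast
      then have "inner (?H *v Tm z + ?b) (Tm (unst (?H *v Tm z + ?b))) = 0" by metis
      then have "?H *v Tm z + ?b = 0" unfolding Tm_unst by simp
      then show "?H *v stack (vecm zQ) zS = - ?b" unfolding Tz by (simp add: eq_neg_iff_add_eq_0)
    next
      assume "?H *v stack (vecm zQ) zS = - ?b"
      then have "?H *v Tm z + ?b = 0" unfolding Tz by simp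
      then have "(?F has_derivative (\<lambda>h. inner h 0)) (at z)" using fder by simp
      then show "GDERIV ?F (zQ, zS) :> 0" unfolding gderiv_def z_def .
    qed
  qed
  have P5: "\<forall>w. ?F w \<le> fobj \<sigma> \<gamma>P c \<gamma> \<nu> \<rho> (zQstar \<sigma> \<gamma>P c \<gamma> \<nu> \<rho>) (zSstar \<sigma> \<gamma>P c \<gamma> \<nu> \<rho>)"
    using maxle unfolding zs_def by simp
  show ?thesis using P1 P2 P3 sol[OF assms] P5 by blast
qed


end
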